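(* (a) Suppose $\hat\rho_{\rm loc}$ is a density matrix on $\mathcal H_{\rm loc}$ all of whose eigenvalues are nonzero. Then $\mathcal L(\hat\rho_{\rm loc}^{\otimes n})=0$ if and only if both of the following hold: (iii$'$) $\mathcal L_i(\hat\rho_{\rm loc})=0$ for all $i\in\Lambda$; (iv$'$) $[\hat H_{ij},(\hat\rho_{\rm loc})_i\otimes(\hat\rho_{\rm loc})_j]=0$ for all $(i,j)\in\Lambda_2$. (b) For an arbitrary density matrix $\hat\rho_{\rm loc}$ on $\mathcal H_{\rm loc}$ (not necessarily of full rank), if (iii$'$) and (iv$'$) both hold, then $\mathcal L(\hat\rho_{\rm loc}^{\otimes n})=0$.
   Context: Setting: a lattice of $n$ sites $\Lambda=\{1,\dots,n\}$, $\Lambda_2=\{(i,j):1\le i<j\le n\}$; each site carries a copy of a finite-dimensional Hilbert space $\mathcal H_{\rm loc}$ of dimension $d$, total space $\mathcal H=\mathcal H_{\rm loc}^{\otimes n}$; $X_i$ denotes a single-site operator $X$ acting on site $i$. Dynamics: GKSL equation $\frac{d\hat\rho}{dt}=\mathcal L(\hat\rho)=-i[\hat H,\hat\rho]+\sum_k\mathcal D_{\hat L_k}(\hat\rho)$, $\mathcal D_{\hat L}(\rho)=\hat L\rho\hat L^\dagger-\frac12\{\hat L^\dagger\hat L,\rho\}$. Every Lindblad operator acts on a single site; those on site $i$ are $\hat L_i^{(\alpha)}$, $\alpha\in\Gamma_i$. $\hat H$ is Hermitian and a sum of at most 2-site terms. With ${\rm Tr}_{\overline{ij}}$, ${\rm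 Tr}_{\overline i}$ the partial traces over all sites other than $i,j$, resp. other than $i$, define $\hat H_{ij}=\frac{{\rm Tr}_{\overline{ij}}[\hat H]}{d^{n-2}}-\frac{{\rm Tr}_{\overline i}[\hat H]}{d^{n-1}}-\frac{{\rm Tr}_{\overline j}[\hat H]}{d^{n-1}}+\frac{{\rm Tr}[\hat H]}{d^n}$ and $\hat H_i=\frac{{\rm Tr}_{\overline i}[\hat H]}{d^{n-1}}-\frac{{\rm Tr}[\hat H]}{d^n}$, so that $\hat H=\sum_{(i,j)\in\Lambda_2}\hat H_{ij}+\sum_i\hat H_i+d^{-n}{\rm Tr}[\hat H]$. The single-site superoperator is $\mathcal L_i(\bullet)=-i[\hat H_i,\bullet]+\sum_{\alpha\in\Gamma_i}\mathcal D_{\hat L_i^{(\alpha)}}(\bullet)$, so $\mathcal L=-i\sum_{(i,j)\in\Lambda_2}[\hat H_{ij},\cdot]+\sum_i\mathcal L_i$. *)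

theory Defs
  imports Complex_Main
begin

text \<open>
The local Hilbert space is C^d with basis indices 0..<d; a local operator is a
function lop = nat => nat => complex (matrix entries, only indices < d matter).
Sites are 0..<n (the paper's 1..n). The basis of the total space H_loc^{tensor n} is indexed
by configurations: lists of length n with entries < d. A global operator is a
function gop = nat list => nat list => complex (only configurations matter).
\<close>

type_synonym lop = "nat \<Rightarrow> nat \<Rightarrow> complex"
type_synonym gop = "nat list \<Rightarrow> nat list \<Rightarrow> complex"

definition cfgs :: "nat \<Rightarrow> nat \<Rightarrow> nat list set" where
  "cfgs n d = {xs. length xs = n \<and> set xs \<subseteq> {..<d}}"

definition lmult :: "nat \<Rightarrow> lop \<Rightarrow> lop \<Rightarrow> lop" where
  "lmult d A B = (\<lambda>a b. \<Sum>k<d. A a k * B k b)"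

definition ladj :: "lop \<Rightarrow> lop" where
  "ladj A = (\<lambda>a b. cnj (A b a))"

definition lcomm :: "nat \<Rightarrow> lop \<Rightarrow> lop \<Rightarrow> lop" where
  "lcomm d A B = (\<lambda>a b. lmult d A B a b - lmult d B A a b)"

definition ldiss :: "nat \<Rightarrow> lop \<Rightarrow> lop \<Rightarrow> lop" where
  "ldiss d L \<rho> = (\<lambda>a b. lmult d (lmult d L \<rho>) (ladj L) a b
      - (1/2) * (lmult d (lmult d (ladj L) L) \<rho> a b + lmult d \<rho> (lmult d (ladj L) L) a b))"

definition is_density :: "nat \<Rightarrow> lop \<Rightarrow> bool" where
  "is_density d \<rho> \<longleftrightarrow>
     (\<forall>a<d. \<forall>b<d. \<rho> b a = cnj (\<rho> a b)) \<and>
     (\<forall>v::nat \<Rightarrow> complex. let q = (\<Sum>a<d. \<Sum>b<d. cnj (v a) * \<rho> a b * v b) in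
          Im q = 0 \<and> Re q \<ge> 0) \<and>
     (\<Sum>a<d. \<rho> a a) = 1"

definition leigenvalue :: "nat \<Rightarrow> lop \<Rightarrow> complex \<Rightarrow> bool" where
  "leigenvalue d A \<mu> \<longleftrightarrow>
     (\<exists>v::nat \<Rightarrow> complex. (\<exists>b<d. v b \<noteq> 0) \<and> (\<forall>a<d. (\<Sum>b<d. A a b * v b) = \<mu> * v a))"

definition gmult :: "nat \<Rightarrow> nat \<Rightarrow> gop \<Rightarrow> gop \<Rightarrow> gop" where
  "gmult n d A B = (\<lambda>x y. \<Sum>z\<in>cfgs n d. A x z * B z y)"

definition gadj :: "gop \<Rightarrow> gop" where
  "gadj A = (\<lambda>x y. cnj (A y x))"

definition gcomm :: "nat \<Rightarrow> nat \<Rightarrow> gop \<Rightarrow> gop \<Rightarrow> gop" where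
  "gcomm n d A B = (\<lambda>x y. gmult n d A B x y - gmult n d B A x y)"

definition gdiss :: "nat \<Rightarrow> nat \<Rightarrow> gop \<Rightarrow> gop \<Rightarrow> gop" where
  "gdiss n d L \<rho> = (\<lambda>x y. gmult n d (gmult n d L \<rho>) (gadj L) x y
      - (1/2) * (gmult n d (gmult n d (gadj L) L) \<rho> x y + gmult n d \<rho> (gmult n d (gadj L) L) x y))"

definition gtrace :: "nat \<Rightarrow> nat \<Rightarrow> gop \<Rightarrow> complex" where
  "gtrace n d A = (\<Sum>x\<in>cfgs n d. A x x)"

definition agree_off :: "nat \<Rightarrow> nat set \<Rightarrow> nat list \<Rightarrow> nat list \<Rightarrow> bool" where
  "agree_off n S x y \<longleftrightarrow> (\<forall>k<n. k \<notin> S \<longrightarrow> x ! k = y ! k)"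

definition embed1 :: "nat \<Rightarrow> nat \<Rightarrow> lop \<Rightarrow> gop" where
  "embed1 n i X = (\<lambda>x y. if agree_off n {i} x y then X (x ! i) (y ! i) else 0)"

text \<open>X_i tensor Y_j (identity elsewhere), for i different from j.\<close>
definition embed2 :: "nat \<Rightarrow> nat \<Rightarrow> nat \<Rightarrow> lop \<Rightarrow> lop \<Rightarrow> gop" where
  "embed2 n i j X Y = (\<lambda>x y. if agree_off n {i, j} x y
       then X (x ! i) (y ! i) * Y (x ! j) (y ! j) else 0)"

definition tensor_pow :: "nat \<Rightarrow> lop \<Rightarrow> gop" where
  "tensor_pow n X = (\<lambda>x y. \<Prod>k<n. X (x ! k) (y ! k))"

definition merge :: "nat \<Rightarrow> nat set \<Rightarrow> nat list \<Rightarrow> nat list \<Rightarrow> nat list" where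
  "merge n S x z = map (\<lambda>k. if k \<in> S then x ! k else z ! k) [0..<n]"

definition compl_cfgs :: "nat \<Rightarrow> nat \<Rightarrow> nat set \<Rightarrow> nat list set" where
  "compl_cfgs n d S = {z \<in> cfgs n d. \<forall>k\<in>S. k < n \<longrightarrow> z ! k = 0}"

text \<open>(Tr_{complement of S}[A] / d^{n - |S|}) tensor identity on the complement of S,
  as an operator on the total space (S a subset of the sites).\<close>
definition ptr_embed :: "nat \<Rightarrow> nat \<Rightarrow> nat set \<Rightarrow> gop \<Rightarrow> gop" where
  "ptr_embed n d S A = (\<lambda>x y. if agree_off n S x y
      then (\<Sum>c\<in>compl_cfgs n d S. A (merge n S x c) (merge n S y c)) / of_nat d ^ (n - card S)
      else 0)"

definition Hpair :: "nat \<Rightarrow> nat \<Rightarrow> gop \<Rightarrow> nat \<Rightarrow> nat \<Rightarrow> gop" where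
  "Hpair n d H i j = (\<lambda>x y. ptr_embed n d {i, j} H x y - ptr_embed n d {i} H x y
      - ptr_embed n d {j} H x y + ptr_embed n d {} H x y)"

text \<open>H_i = Tr_{not i}[H]/d^{n-1} - Tr[H]/d^n, as a d x d matrix on site i.\<close>
definition Hsite :: "nat \<Rightarrow> nat \<Rightarrow> gop \<Rightarrow> nat \<Rightarrow> lop" where
  "Hsite n d H i = (\<lambda>a b.
      (\<Sum>c\<in>compl_cfgs n d {i}. H (c[i := a]) (c[i := b])) / of_nat d ^ (n - 1)
      - (if a = b then gtrace n d H / of_nat d ^ n else 0))"

definition acts_on :: "nat \<Rightarrow> nat \<Rightarrow> nat set \<Rightarrow> gop \<Rightarrow> bool" where
  "acts_on n d S A \<longleftrightarrow> (\<exists>a::gop. \<forall>x\<in>cfgs n d. \<forall>y\<in>cfgs n d.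
      A x y = (if agree_off n S x y
               then a (map (\<lambda>k. if k \<in> S then x ! k else 0) [0..<n])
                      (map (\<lambda>k. if k \<in> S then y ! k else 0) [0..<n])
               else 0))"

definition two_local :: "nat \<Rightarrow> nat \<Rightarrow> gop \<Rightarrow> bool" where
  "two_local n d H \<longleftrightarrow> (\<exists>(c::complex) (T::nat \<Rightarrow> nat \<Rightarrow> gop).
      (\<forall>i<n. \<forall>j<n. acts_on n d {i, j} (T i j)) \<and>
      (\<forall>x\<in>cfgs n d. \<forall>y\<in>cfgs n d.
         H x y = (if x = y then c else 0) + (\<Sum>i<n. \<Sum>j<n. T i j x y)))"

definition ghermitian :: "nat \<Rightarrow> nat \<Rightarrow> gop \<Rightarrow> bool" where
  "ghermitian n d H \<longleftrightarrow> (\<forall>x\<in>cfgs n d. \<forall>y\<in>cfgs n d. H y x = cnj (H x y))"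

definition GKSL :: "nat \<Rightarrow> nat \<Rightarrow> gop \<Rightarrow> (nat \<Rightarrow> 'g set) \<Rightarrow> (nat \<Rightarrow> 'g \<Rightarrow> lop) \<Rightarrow> gop \<Rightarrow> gop" where
  "GKSL n d H Gam Lop \<rho> = (\<lambda>x y. - \<i> * gcomm n d H \<rho> x y
      + (\<Sum>i<n. \<Sum>\<alpha>\<in>Gam i. gdiss n d (embed1 n i (Lop i \<alpha>)) \<rho> x y))"

definition Lsite :: "nat \<Rightarrow> nat \<Rightarrow> gop \<Rightarrow> (nat \<Rightarrow> 'g set) \<Rightarrow> (nat \<Rightarrow> 'g \<Rightarrow> lop) \<Rightarrow> nat \<Rightarrow> lop \<Rightarrow> lop" where
  "Lsite n d H Gam Lop i \<rho> = (\<lambda>a b. - \<i> * lcomm d (Hsite n d H i) \<rho> a b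
      + (\<Sum>\<alpha>\<in>Gam i. ldiss d (Lop i \<alpha>) \<rho> a b))"

definition gzero :: "nat \<Rightarrow> nat \<Rightarrow> gop \<Rightarrow> bool" where
  "gzero n d A \<longleftrightarrow> (\<forall>x\<in>cfgs n d. \<forall>y\<in>cfgs n d. A x y = 0)"

definition lzero :: "nat \<Rightarrow> lop \<Rightarrow> bool" where
  "lzero d A \<longleftrightarrow> (\<forall>a<d. \<forall>b<d. A a b = 0)"

definition cond_iii :: "nat \<Rightarrow> nat \<Rightarrow> gop \<Rightarrow> (nat \<Rightarrow> 'g set) \<Rightarrow> (nat \<Rightarrow> 'g \<Rightarrow> lop) \<Rightarrow> lop \<Rightarrow> bool" where
  "cond_iii n d H Gam Lop \<rho> \<longleftrightarrow> (\<forall>i<n. lzero d (Lsite n d H Gam Lop i \<rho>))"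

definition cond_iv :: "nat \<Rightarrow> nat \<Rightarrow> gop \<Rightarrow> lop \<Rightarrow> bool" where
  "cond_iv n d H \<rho> \<longleftrightarrow> (\<forall>i j. i < j \<and> j < n \<longrightarrow>
      gzero n d (gcomm n d (Hpair n d H i j) (embed2 n i j \<rho> \<rho>)))"

end

theory Submission
  imports Defs "Jordan_Normal_Form.Determinant"
begin


lemma cfgs_Suc: "cfgs (Suc n) d = (\<lambda>(a,xs). a#xs) ` ({..<d} \<times> cfgs n d)"
proof (rule Set.set_eqI, rule iffI)
  fix xs assume "xs \<in> cfgs (Suc n) d"
  then show "xs \<in> (\<lambda>(a,xs). a#xs) ` ({..<d} \<times> cfgs n d)"
    by (cases xs) (auto simp: cfgs_def image_iff)
qed (auto simp: cfgs_def)

lemma cfgs_0: "cfgs 0 d = {[]}"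
  by (auto simp: cfgs_def)

lemma finite_cfgs: "finite (cfgs n d)"
  by (induction n) (auto simp: cfgs_Suc cfgs_0)

lemma sum_cfgs_prod:
  "(\<Sum>c\<in>cfgs n d. \<Prod>l<n. h l (c!l)) = (\<Prod>l<n. \<Sum>u<d. (h l u :: complex))"
proof (induction n arbitrary: h)
  case 0
  then show ?case by (simp add: cfgs_0)
next
  case (Suc n)
  have inj: "inj_on (\<lambda>(a,xs). a#xs) ({..<d} \<times> cfgs n d)" by (auto simp: inj_on_def)
  have "(\<Sum>c\<in>cfgs (Suc n) d. \<Prod>l<Suc n. h l (c!l))
      = (\<Sum>p\<in>{..<d} \<times> cfgs n d. \<Prod>l<Suc n. h l ((fst p # snd p)!l))"
    unfolding cfgs_Suc by (subst sum.reindex[OF inj]) (simp add: case_prod_beta)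
  also have "\<dots> = (\<Sum>a<d. \<Sum>xs\<in>cfgs n d. h 0 a * (\<Prod>l<n. h (Suc l) (xs!l)))"
    by (simp add: sum.cartesian_product prod.lessThan_Suc_shift case_prod_beta del: prod.lessThan_Suc)
  also have "\<dots> = (\<Sum>a<d. h 0 a) * (\<Prod>l<n. \<Sum>u<d. h (Suc l) u)"
    by (simp add: sum_distrib_left[symmetric] sum_distrib_right Suc.IH[of "\<lambda>l. h (Suc l)"])
  also have "\<dots> = (\<Prod>l<Suc n. \<Sum>u<d. h l u)"
    by (simp add: prod.lessThan_Suc_shift del: prod.lessThan_Suc)
  finally show ?case .
qed




definition lid :: lop where "lid = (\<lambda>a b. if a = b then 1 else 0)"
definition ltr :: "nat \<Rightarrow> lop \<Rightarrow> complex" where "ltr d A = (\<Sum>a<d. A a a)"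
definition lunit :: "nat \<Rightarrow> nat \<Rightarrow> lop" where "lunit a b = (\<lambda>u v. if u = a \<and> v = b then 1 else 0)"
definition prodop :: "nat \<Rightarrow> (nat \<Rightarrow> lop) \<Rightarrow> gop" where
  "prodop n f = (\<lambda>x y. \<Prod>l<n. f l (x!l) (y!l))"
definition geq :: "nat \<Rightarrow> nat \<Rightarrow> gop \<Rightarrow> gop \<Rightarrow> bool" where
  "geq n d A B \<longleftrightarrow> (\<forall>x\<in>cfgs n d. \<forall>y\<in>cfgs n d. A x y = B x y)"
definition gadd :: "gop \<Rightarrow> gop \<Rightarrow> gop" where "gadd A B = (\<lambda>x y. A x y + B x y)"
definition gscale :: "complex \<Rightarrow> gop \<Rightarrow> gop" where "gscale c A = (\<lambda>x y. c * A x y)"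
definition linmap :: "nat \<Rightarrow> nat \<Rightarrow> (gop \<Rightarrow> gop) \<Rightarrow> bool" where
  "linmap n d F \<longleftrightarrow> (\<forall>A B. geq n d A B \<longrightarrow> geq n d (F A) (F B)) \<and>
     (\<forall>A B. geq n d (F (gadd A B)) (gadd (F A) (F B))) \<and>
     (\<forall>c A. geq n d (F (gscale c A)) (gscale c (F A)))"

lemma geq_refl[simp]: "geq n d A A" by (simp add: geq_def)
lemma geq_sym: "geq n d A B \<Longrightarrow> geq n d B A" by (simp add: geq_def)
lemma geq_trans[trans]: "geq n d A B \<Longrightarrow> geq n d B C \<Longrightarrow> geq n d A C" by (simp add: geq_def)
lemma geqD: "geq n d A B \<Longrightarrow> x \<in> cfgs n d \<Longrightarrow> y \<in> cfgs n d \<Longrightarrow> A x y = B x y"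
  by (simp add: geq_def)
lemma geqI: "(\<And>x y. x \<in> cfgs n d \<Longrightarrow> y \<in> cfgs n d \<Longrightarrow> A x y = B x y) \<Longrightarrow> geq n d A B"
  by (simp add: geq_def)

lemma cfgs_nth: "x \<in> cfgs n d \<Longrightarrow> l < n \<Longrightarrow> x ! l < d"
  unfolding cfgs_def by (metis (mono_tags, lifting) lessThan_iff mem_Collect_eq nth_mem subsetD)
lemma cfgs_length: "x \<in> cfgs n d \<Longrightarrow> length x = n"
  by (auto simp: cfgs_def)
lemma cfgs_iff: "x \<in> cfgs n d \<longleftrightarrow> length x = n \<and> (\<forall>l<n. x ! l < d)"
  by (auto simp: cfgs_def subset_iff in_set_conv_nth)

lemma geq_sum:
  "(\<And>p. p \<in> I \<Longrightarrow> geq n d (F p) (G p)) \<Longrightarrow>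
   geq n d (\<lambda>x y. \<Sum>p\<in>I. F p x y) (\<lambda>x y. \<Sum>p\<in>I. G p x y)"
  by (auto simp: geq_def intro!: sum.cong)

subsection \<open>product operators\<close>

lemma prodop_mult:
  "gmult n d (prodop n f) (prodop n g) = prodop n (\<lambda>l. lmult d (f l) (g l))"
proof (intro ext)
  fix x y
  have "gmult n d (prodop n f) (prodop n g) x y
      = (\<Sum>z\<in>cfgs n d. \<Prod>l<n. f l (x!l) (z!l) * g l (z!l) (y!l))"
    by (simp add: gmult_def prodop_def prod.distrib)
  also have "\<dots> = (\<Prod>l<n. \<Sum>u<d. f l (x!l) u * g l u (y!l))"
    by (rule sum_cfgs_prod)
  finally show "gmult n d (prodop n f) (prodop n g) x y = prodop n (\<lambda>l. lmult d (f l) (g l)) x y"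
    by (simp add: prodop_def lmult_def)
qed

lemma prodop_cong:
  assumes "\<And>l a b. l < n \<Longrightarrow> a < d \<Longrightarrow> b < d \<Longrightarrow> f l a b = g l a b"
  shows "geq n d (prodop n f) (prodop n g)"
  using assms by (auto simp: geq_def prodop_def cfgs_nth intro!: prod.cong)

lemma prodop_site:
  assumes "p < n"
  shows "prodop n f x y = f p (x!p) (y!p) * (\<Prod>l\<in>{..<n}-{p}. f l (x!l) (y!l))"
  unfolding prodop_def using assms
  by (simp add: prod.remove[of "{..<n}" p])

lemma sum_compl_cfgs_prod:
  assumes d: "0 < d"
  shows "(\<Sum>c\<in>compl_cfgs n d S. \<Prod>l<n. h l (c!l)) =
         (\<Prod>l<n. if l \<in> S then h l 0 else (\<Sum>u<d. (h l u :: complex)))"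
proof -
  let ?h = "\<lambda>l u. if l \<in> S then (if u = 0 then h l u else 0) else h l u"
  have "(\<Sum>c\<in>compl_cfgs n d S. \<Prod>l<n. h l (c!l)) = (\<Sum>c\<in>cfgs n d. \<Prod>l<n. ?h l (c!l))"
  proof -
    have sub: "compl_cfgs n d S \<subseteq> cfgs n d" by (auto simp: compl_cfgs_def)
    have "(\<Sum>c\<in>compl_cfgs n d S. \<Prod>l<n. h l (c!l)) = (\<Sum>c\<in>compl_cfgs n d S. \<Prod>l<n. ?h l (c!l))"
      by (rule sum.cong) (auto simp: compl_cfgs_def intro!: prod.cong)
    also have "\<dots> = (\<Sum>c\<in>cfgs n d. \<Prod>l<n. ?h l (c!l))"
    proof (rule sum.mono_neutral_left[OF finite_cfgs sub], rule ballI)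
      fix c assume "c \<in> cfgs n d - compl_cfgs n d S"
      then obtain k where k: "k \<in> S" "k < n" "c ! k \<noteq> 0" by (auto simp: compl_cfgs_def)
      show "(\<Prod>l<n. ?h l (c!l)) = 0"
        using k by (intro prod_zero) (auto intro!: bexI[of _ k])
    qed
    finally show ?thesis .
  qed
  also have "\<dots> = (\<Prod>l<n. \<Sum>u<d. ?h l u)" by (rule sum_cfgs_prod)
  also have "\<dots> = (\<Prod>l<n. if l \<in> S then h l 0 else (\<Sum>u<d. h l u))"
  proof (intro prod.cong refl)
    fix l
    show "(\<Sum>u<d. ?h l u) = (if l \<in> S then h l 0 else (\<Sum>u<d. h l u))"
    proof (cases "l \<in> S")
      case True
      then have "(\<Sum>u<d. ?h l u) = (\<Sum>u<d. if u = 0 then h l u else 0)" by (intro sum.cong) auto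
      then show ?thesis using True d by (simp add: sum.delta)
    qed simp
  qed
  finally show ?thesis .
qed

lemma merge_nth: "l < n \<Longrightarrow> merge n S x c ! l = (if l \<in> S then x ! l else c ! l)"
  by (simp add: merge_def)

lemma merge_cfgs: "x \<in> cfgs n d \<Longrightarrow> c \<in> cfgs n d \<Longrightarrow> merge n S x c \<in> cfgs n d"
  by (auto simp: cfgs_iff merge_def)

lemma prod_div_helper:
  fixes A B :: "nat \<Rightarrow> complex"
  assumes S: "S \<subseteq> {..<n}" and c: "c \<noteq> 0"
  shows "(\<Prod>l<n. if l \<in> S then A l else B l) / c ^ (n - card S)
       = (\<Prod>l<n. if l \<in> S then A l else B l / c)"
proof -
  have fin: "finite S" using S finite_subset by blast
  have card: "card ({..<n} \<inter> - S) = n - card S"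
    using S fin by (simp add: Diff_eq[symmetric] card_Diff_subset)
  have e1: "(\<Prod>l<n. if l \<in> S then A l else B l) = (\<Prod>l\<in>{..<n} \<inter> S. A l) * (\<Prod>l\<in>{..<n} \<inter> - S. B l)"
    by (simp add: prod.If_cases)
  have e2: "(\<Prod>l<n. if l \<in> S then A l else B l / c) = (\<Prod>l\<in>{..<n} \<inter> S. A l) * (\<Prod>l\<in>{..<n} \<inter> - S. B l / c)"
    by (simp add: prod.If_cases)
  have e3: "(\<Prod>l\<in>{..<n} \<inter> - S. B l / c) = (\<Prod>l\<in>{..<n} \<inter> - S. B l) / c ^ (n - card S)"
    by (simp add: prod_dividef card)
  show ?thesis using e1 e2 e3 by simp
qed

lemma ptr_prodop:
  assumes d: "0 < d" and S: "S \<subseteq> {..<n}"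
  shows "geq n d (ptr_embed n d S (prodop n f))
                 (prodop n (\<lambda>l. if l \<in> S then f l else (\<lambda>a b. ltr d (f l) / of_nat d * lid a b)))"
proof (rule geqI)
  fix x y assume x: "x \<in> cfgs n d" and y: "y \<in> cfgs n d"
  show "ptr_embed n d S (prodop n f) x y =
        prodop n (\<lambda>l. if l \<in> S then f l else (\<lambda>a b. ltr d (f l) / of_nat d * lid a b)) x y"
  proof (cases "agree_off n S x y")
    case True
    have "(\<Sum>c\<in>compl_cfgs n d S. prodop n f (merge n S x c) (merge n S y c))
        = (\<Sum>c\<in>compl_cfgs n d S. \<Prod>l<n. (\<lambda>l u. if l \<in> S then f l (x!l) (y!l) else f l u u) l (c!l))"
      by (intro sum.cong refl) (auto simp: prodop_def merge_nth intro!: prod.cong)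
    also have "\<dots> = (\<Prod>l<n. if l \<in> S then f l (x!l) (y!l) else ltr d (f l))"
      by (subst sum_compl_cfgs_prod[OF d]) (auto simp: ltr_def intro!: prod.cong)
    finally have eq: "(\<Sum>c\<in>compl_cfgs n d S. prodop n f (merge n S x c) (merge n S y c))
        = (\<Prod>l<n. if l \<in> S then f l (x!l) (y!l) else ltr d (f l))" .
    have "ptr_embed n d S (prodop n f) x y = (\<Prod>l<n. if l \<in> S then f l (x!l) (y!l) else ltr d (f l)) / of_nat d ^ (n - card S)"
      using True eq by (simp add: ptr_embed_def)
    also have "\<dots> = (\<Prod>l<n. if l \<in> S then f l (x!l) (y!l) else ltr d (f l) / of_nat d)"
      using d S by (intro prod_div_helper) auto
    also have "\<dots> = prodop n (\<lambda>l. if l \<in> S then f l else (\<lambda>a b. ltr d (f l) / of_nat d * lid a b)) x y"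
      using True by (auto simp: prodop_def lid_def agree_off_def intro!: prod.cong)
    finally show ?thesis .
  next
    case False
    then obtain k where k: "k < n" "k \<notin> S" "x ! k \<noteq> y ! k" by (auto simp: agree_off_def)
    have "prodop n (\<lambda>l. if l \<in> S then f l else (\<lambda>a b. ltr d (f l) / of_nat d * lid a b)) x y = 0"
      unfolding prodop_def using k by (intro prod_zero) (auto simp: lid_def intro!: bexI[of _ k])
    then show ?thesis using False by (simp add: ptr_embed_def)
  qed
qed

lemma prod_if_01:
  "finite I \<Longrightarrow> (\<Prod>l\<in>I. if P l then 1 else (0::complex)) = (if \<forall>l\<in>I. P l then 1 else 0)"
  by (induction rule: finite_induct) auto

lemma prodop_unit:
  assumes "length x = n" "length y = n" "length u = n" "length v = n"
  shows "prodop n (\<lambda>l. lunit (u!l) (v!l)) x y = (if x = u \<and> y = v then 1 else 0)"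
proof -
  have "prodop n (\<lambda>l. lunit (u!l) (v!l)) x y = (if \<forall>l\<in>{..<n}. x!l = u!l \<and> y!l = v!l then 1 else 0)"
    unfolding prodop_def lunit_def by (rule prod_if_01) simp
  also have "(\<forall>l\<in>{..<n}. x!l = u!l \<and> y!l = v!l) \<longleftrightarrow> x = u \<and> y = v"
    using assms by (auto simp: list_eq_iff_nth_eq)
  finally show ?thesis .
qed

lemma expand_units:
  "geq n d A (\<lambda>x y. \<Sum>p\<in>cfgs n d \<times> cfgs n d. gscale (A (fst p) (snd p)) (prodop n (\<lambda>l. lunit (fst p!l) (snd p!l))) x y)"
proof (rule geqI)
  fix x y assume x: "x \<in> cfgs n d" and y: "y \<in> cfgs n d"
  have "(\<Sum>p\<in>cfgs n d \<times> cfgs n d. gscale (A (fst p) (snd p)) (prodop n (\<lambda>l. lunit (fst p!l) (snd p!l))) x y)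
     = (\<Sum>p\<in>cfgs n d \<times> cfgs n d. if p = (x,y) then A x y else 0)"
  proof (intro sum.cong refl)
    fix p assume "p \<in> cfgs n d \<times> cfgs n d"
    then obtain a b where p: "p = (a,b)" "a \<in> cfgs n d" "b \<in> cfgs n d" by auto
    show "gscale (A (fst p) (snd p)) (prodop n (\<lambda>l. lunit (fst p!l) (snd p!l))) x y = (if p = (x,y) then A x y else 0)"
      using p x y by (auto simp: gscale_def prodop_unit cfgs_length)
  qed
  also have "\<dots> = A x y" using x y by (simp add: finite_cfgs)
  finally show "A x y = (\<Sum>p\<in>cfgs n d \<times> cfgs n d. gscale (A (fst p) (snd p)) (prodop n (\<lambda>l. lunit (fst p!l) (snd p!l))) x y)" by simp
qed

subsection \<open>linear maps\<close>

lemma linmap_sum: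
  assumes L: "linmap n d F" and I: "finite I"
  shows "geq n d (F (\<lambda>x y. \<Sum>p\<in>I. G p x y)) (\<lambda>x y. \<Sum>p\<in>I. F (G p) x y)"
  using I
proof (induction rule: finite_induct)
  case empty
  have "geq n d (F (gscale 0 (\<lambda>x y. 0))) (gscale 0 (F (\<lambda>x y. 0)))"
    using L by (simp add: linmap_def)
  then show ?case by (simp add: gscale_def)
next
  case (insert p I)
  have "(\<lambda>x y. \<Sum>p\<in>insert p I. G p x y) = gadd (G p) (\<lambda>x y. \<Sum>p\<in>I. G p x y)"
    using insert by (simp add: gadd_def)
  then have "geq n d (F (\<lambda>x y. \<Sum>p\<in>insert p I. G p x y)) (gadd (F (G p)) (F (\<lambda>x y. \<Sum>p\<in>I. G p x y)))"
    using L by (simp add: linmap_def)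
  also have "geq n d \<dots> (\<lambda>x y. \<Sum>p\<in>insert p I. F (G p) x y)"
    using insert by (auto simp: geq_def gadd_def)
  finally show ?case .
qed

lemma linmap_resp: "linmap n d F \<Longrightarrow> geq n d A B \<Longrightarrow> geq n d (F A) (F B)"
  by (simp add: linmap_def)

lemma expansion_principle:
  assumes LF: "linmap n d F" and LG: "linmap n d G"
    and P: "\<And>f. geq n d (F (prodop n f)) (G (prodop n f))"
  shows "geq n d (F A) (G A)"
proof -
  let ?U = "\<lambda>p. prodop n (\<lambda>l. lunit (fst p!l) (snd p!l))"
  let ?E = "\<lambda>x y. \<Sum>p\<in>cfgs n d \<times> cfgs n d. gscale (A (fst p) (snd p)) (?U p) x y"
  have fin: "finite (cfgs n d \<times> cfgs n d)" by (simp add: finite_cfgs)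
  have "geq n d (F A) (F ?E)" by (rule linmap_resp[OF LF expand_units])
  also have "geq n d \<dots> (\<lambda>x y. \<Sum>p\<in>cfgs n d \<times> cfgs n d. F (gscale (A (fst p) (snd p)) (?U p)) x y)"
    by (rule linmap_sum[OF LF fin])
  also have "geq n d \<dots> (\<lambda>x y. \<Sum>p\<in>cfgs n d \<times> cfgs n d. G (gscale (A (fst p) (snd p)) (?U p)) x y)"
  proof (rule geq_sum)
    fix p
    have "geq n d (F (gscale (A (fst p) (snd p)) (?U p))) (gscale (A (fst p) (snd p)) (F (?U p)))"
      using LF by (simp add: linmap_def)
    also have "geq n d \<dots> (gscale (A (fst p) (snd p)) (G (?U p)))"
      using P by (auto simp: geq_def gscale_def)
    also have "geq n d \<dots> (G (gscale (A (fst p) (snd p)) (?U p)))"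
      using LG by (simp add: linmap_def geq_sym)
    finally show "geq n d (F (gscale (A (fst p) (snd p)) (?U p))) (G (gscale (A (fst p) (snd p)) (?U p)))" .
  qed
  also have "geq n d \<dots> (G ?E)"
    by (rule geq_sym, rule linmap_sum[OF LG fin])
  also have "geq n d \<dots> (G A)"
    by (rule linmap_resp[OF LG], rule geq_sym, rule expand_units)
  finally show ?thesis .
qed

lemma linmap_gmult_left: "linmap n d (\<lambda>A. gmult n d A B)"
  unfolding linmap_def
  by (auto simp: geq_def gmult_def gadd_def gscale_def sum.distrib sum_distrib_left algebra_simps
           intro!: sum.cong)

lemma linmap_gmult_right: "linmap n d (\<lambda>A. gmult n d B A)"
  unfolding linmap_def
  by (auto simp: geq_def gmult_def gadd_def gscale_def sum.distrib sum_distrib_left algebra_simps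
           intro!: sum.cong)

lemma linmap_ptr: "linmap n d (ptr_embed n d S)"
  unfolding linmap_def
  by (auto simp: geq_def ptr_embed_def gadd_def gscale_def sum.distrib sum_distrib_left algebra_simps
           compl_cfgs_def merge_cfgs add_divide_distrib intro!: sum.cong)

lemma linmap_comp: "linmap n d F \<Longrightarrow> linmap n d G \<Longrightarrow> linmap n d (\<lambda>A. F (G A))"
  unfolding linmap_def by (meson geq_trans)

lemma linmap_sub:
  assumes F: "linmap n d F" and G: "linmap n d G"
  shows "linmap n d (\<lambda>A. (\<lambda>x y. F A x y - G A x y))"
  unfolding linmap_def
proof (intro conjI allI impI)
  fix A B assume "geq n d A B"
  then have "geq n d (F A) (F B)" "geq n d (G A) (G B)" using F G linmap_resp by blast+
  then show "geq n d (\<lambda>x y. F A x y - G A x y) (\<lambda>x y. F B x y - G B x y)" by (simp add: geq_def)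
next
  fix A B
  have "geq n d (F (gadd A B)) (gadd (F A) (F B))" "geq n d (G (gadd A B)) (gadd (G A) (G B))"
    using F G by (simp_all add: linmap_def)
  then show "geq n d (\<lambda>x y. F (gadd A B) x y - G (gadd A B) x y) (gadd (\<lambda>x y. F A x y - G A x y) (\<lambda>x y. F B x y - G B x y))"
    by (simp add: geq_def gadd_def)
next
  fix c A
  have "geq n d (F (gscale c A)) (gscale c (F A))" "geq n d (G (gscale c A)) (gscale c (G A))"
    using F G by (simp_all add: linmap_def)
  then show "geq n d (\<lambda>x y. F (gscale c A) x y - G (gscale c A) x y) (gscale c (\<lambda>x y. F A x y - G A x y))"
    by (simp add: geq_def gscale_def algebra_simps)
qed

lemma linmap_add:
  assumes F: "linmap n d F" and G: "linmap n d G"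
  shows "linmap n d (\<lambda>A. (\<lambda>x y. F A x y + G A x y))"
  unfolding linmap_def
proof (intro conjI allI impI)
  fix A B assume "geq n d A B"
  then have "geq n d (F A) (F B)" "geq n d (G A) (G B)" using F G linmap_resp by blast+
  then show "geq n d (\<lambda>x y. F A x y + G A x y) (\<lambda>x y. F B x y + G B x y)" by (simp add: geq_def)
next
  fix A B
  have "geq n d (F (gadd A B)) (gadd (F A) (F B))" "geq n d (G (gadd A B)) (gadd (G A) (G B))"
    using F G by (simp_all add: linmap_def)
  then show "geq n d (\<lambda>x y. F (gadd A B) x y + G (gadd A B) x y) (gadd (\<lambda>x y. F A x y + G A x y) (\<lambda>x y. F B x y + G B x y))"
    by (simp add: geq_def gadd_def)
next
  fix c A
  have "geq n d (F (gscale c A)) (gscale c (F A))" "geq n d (G (gscale c A)) (gscale c (G A))"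
    using F G by (simp_all add: linmap_def)
  then show "geq n d (\<lambda>x y. F (gscale c A) x y + G (gscale c A) x y) (gscale c (\<lambda>x y. F A x y + G A x y))"
    by (simp add: geq_def gscale_def algebra_simps)
qed

lemma linmap_id: "linmap n d (\<lambda>A. A)"
  unfolding linmap_def geq_def by auto




lemma lmult_assoc: "lmult d (lmult d A B) C = lmult d A (lmult d B C)"
  unfolding lmult_def
  by (intro ext) (simp add: sum_distrib_left sum_distrib_right mult.assoc, rule sum.swap)

lemma ltr_comm: "ltr d (lmult d A B) = ltr d (lmult d B A)"
  unfolding ltr_def lmult_def by (subst sum.swap) (simp add: mult.commute)

lemma lmult_lid_left: "a < d \<Longrightarrow> lmult d lid X a b = X a b"
proof -
  assume a: "a < d"
  have "lmult d lid X a b = (\<Sum>k<d. if a = k then X k b else 0)"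
    unfolding lmult_def lid_def by (rule sum.cong) auto
  then show ?thesis using a by simp
qed

lemma lmult_lid_right: "b < d \<Longrightarrow> lmult d X lid a b = X a b"
proof -
  assume b: "b < d"
  have "lmult d X lid a b = (\<Sum>k<d. if k = b then X a k else 0)"
    unfolding lmult_def lid_def by (rule sum.cong) auto
  then show ?thesis using b by simp
qed

lemma lmult_slid_left: "a < d \<Longrightarrow> lmult d (\<lambda>u v. c * lid u v) X a b = c * X a b"
proof -
  assume a: "a < d"
  have "lmult d (\<lambda>u v. c * lid u v) X a b = (\<Sum>k<d. if a = k then c * X k b else 0)"
    unfolding lmult_def lid_def by (rule sum.cong) auto
  then show ?thesis using a by simp
qed

lemma lmult_slid_right: "b < d \<Longrightarrow> lmult d X (\<lambda>u v. c * lid u v) a b = c * X a b"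
proof -
  assume b: "b < d"
  have "lmult d X (\<lambda>u v. c * lid u v) a b = (\<Sum>k<d. if k = b then c * X a k else 0)"
    unfolding lmult_def lid_def by (rule sum.cong) auto
  then show ?thesis using b by simp
qed

lemma lmult_slidd_left: "a < d \<Longrightarrow> lmult d (\<lambda>u v. c * lid u v / e) X a b = c * X a b / e"
  using lmult_slid_left[of a d "c / e" X b] by (simp add: field_simps)

lemma lmult_slidd_right: "b < d \<Longrightarrow> lmult d X (\<lambda>u v. c * lid u v / e) a b = c * X a b / e"
  using lmult_slid_right[of b d X "c / e" a] by (simp add: field_simps)

lemma ltr_slid: "ltr d (\<lambda>u v. c * lid u v) = c * of_nat d"
  by (simp add: ltr_def lid_def)

lemma ltr_slid2: "ltr d (\<lambda>u v. c * lid u v / e) = c * of_nat d / e"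
  by (simp add: ltr_def lid_def)

lemma ltr_cong: "(\<And>a. a < d \<Longrightarrow> A a a = B a a) \<Longrightarrow> ltr d A = ltr d B"
  by (simp add: ltr_def)

lemma lmult_cong: "(\<And>k. k < d \<Longrightarrow> A a k = A' a k) \<Longrightarrow> (\<And>k. k < d \<Longrightarrow> B k b = B' k b) \<Longrightarrow>
   lmult d A B a b = lmult d A' B' a b"
  by (simp add: lmult_def)

lemma lmult_inv_right:
  assumes inv: "\<And>a b. a < d \<Longrightarrow> b < d \<Longrightarrow> lmult d P Q a b = lid a b" and b: "b < d"
  shows "lmult d (lmult d F P) Q a b = F a b"
proof -
  have "lmult d (lmult d F P) Q a b = lmult d F (lmult d P Q) a b" by (simp add: lmult_assoc)
  also have "\<dots> = lmult d F lid a b" using inv b by (intro lmult_cong) auto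
  also have "\<dots> = F a b" using b by (rule lmult_lid_right)
  finally show ?thesis .
qed

lemma gmult_sub_left: "gmult n d (\<lambda>x y. A x y - B x y) C = (\<lambda>x y. gmult n d A C x y - gmult n d B C x y)"
  by (auto simp: gmult_def algebra_simps sum_subtractf)
lemma gmult_sub_right: "gmult n d C (\<lambda>x y. A x y - B x y) = (\<lambda>x y. gmult n d C A x y - gmult n d C B x y)"
  by (auto simp: gmult_def algebra_simps sum_subtractf)
lemma gmult_add_left: "gmult n d (\<lambda>x y. A x y + B x y) C = (\<lambda>x y. gmult n d A C x y + gmult n d B C x y)"
  by (auto simp: gmult_def algebra_simps sum.distrib)
lemma gmult_add_right: "gmult n d C (\<lambda>x y. A x y + B x y) = (\<lambda>x y. gmult n d C A x y + gmult n d C B x y)"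
  by (auto simp: gmult_def algebra_simps sum.distrib)
lemma ptr_sub: "ptr_embed n d S (\<lambda>x y. A x y - B x y) = (\<lambda>x y. ptr_embed n d S A x y - ptr_embed n d S B x y)"
  by (intro ext) (auto simp: ptr_embed_def sum_subtractf diff_divide_distrib)
lemma ptr_add: "ptr_embed n d S (\<lambda>x y. A x y + B x y) = (\<lambda>x y. ptr_embed n d S A x y + ptr_embed n d S B x y)"
  by (intro ext) (auto simp: ptr_embed_def sum.distrib add_divide_distrib)

lemma gmult_resp_left: "geq n d A A' \<Longrightarrow> geq n d (gmult n d A B) (gmult n d A' B)"
  using linmap_gmult_left linmap_resp by blast
lemma gmult_resp_right: "geq n d A A' \<Longrightarrow> geq n d (gmult n d B A) (gmult n d B A')"
  using linmap_gmult_right linmap_resp by blast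
lemma ptr_resp: "geq n d A A' \<Longrightarrow> geq n d (ptr_embed n d S A) (ptr_embed n d S A')"
  using linmap_ptr linmap_resp by blast
lemma geq_sub: "geq n d A A' \<Longrightarrow> geq n d B B' \<Longrightarrow> geq n d (\<lambda>x y. A x y - B x y) (\<lambda>x y. A' x y - B' x y)"
  by (simp add: geq_def)
lemma geq_add: "geq n d A A' \<Longrightarrow> geq n d B B' \<Longrightarrow> geq n d (\<lambda>x y. A x y + B x y) (\<lambda>x y. A' x y + B' x y)"
  by (simp add: geq_def)

lemma gcomm_eq: "gcomm n d A B = (\<lambda>x y. gmult n d A B x y - gmult n d B A x y)"
  by (simp add: gcomm_def)

lemma gcomm_resp_left: "geq n d A A' \<Longrightarrow> geq n d (gcomm n d A B) (gcomm n d A' B)"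
  unfolding gcomm_eq by (intro geq_sub gmult_resp_left gmult_resp_right)
lemma gcomm_resp_right: "geq n d A A' \<Longrightarrow> geq n d (gcomm n d B A) (gcomm n d B A')"
  unfolding gcomm_eq by (intro geq_sub gmult_resp_left gmult_resp_right)

lemma linmap_gcomm_left: "linmap n d (\<lambda>A. gcomm n d A B)"
  unfolding gcomm_eq by (intro linmap_sub linmap_gmult_left linmap_gmult_right)

subsection \<open>composition of partial traces\<close>

definition ptf :: "nat \<Rightarrow> nat set \<Rightarrow> (nat \<Rightarrow> lop) \<Rightarrow> nat \<Rightarrow> lop" where
  "ptf d S f = (\<lambda>l. if l \<in> S then f l else (\<lambda>a b. ltr d (f l) / of_nat d * lid a b))"

lemma ptr_prodop': "0 < d \<Longrightarrow> S \<subseteq> {..<n} \<Longrightarrow> geq n d (ptr_embed n d S (prodop n f)) (prodop n (ptf d S f))"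
  unfolding ptf_def by (rule ptr_prodop)

lemma ptr_ptr:
  assumes d: "0 < d" and S: "S \<subseteq> {..<n}" and T: "T \<subseteq> {..<n}"
  shows "geq n d (ptr_embed n d S (ptr_embed n d T A)) (ptr_embed n d (S \<inter> T) A)"
proof (rule expansion_principle[OF linmap_comp[OF linmap_ptr linmap_ptr] linmap_ptr])
  fix f
  have "geq n d (ptr_embed n d S (ptr_embed n d T (prodop n f))) (ptr_embed n d S (prodop n (ptf d T f)))"
    by (rule ptr_resp, rule ptr_prodop'[OF d T])
  also have "geq n d \<dots> (prodop n (ptf d S (ptf d T f)))" by (rule ptr_prodop'[OF d S])
  also have "geq n d \<dots> (prodop n (ptf d (S \<inter> T) f))"
  proof (rule prodop_cong)
    fix l a b
    show "ptf d S (ptf d T f) l a b = ptf d (S \<inter> T) f l a b"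
    proof (cases "l \<in> S")
      case True then show ?thesis by (simp add: ptf_def)
    next
      case False
      have "ltr d (ptf d T f l) = ltr d (f l)"
      proof (cases "l \<in> T")
        case False
        then have "ltr d (ptf d T f l) = ltr d (f l) / of_nat d * of_nat d"
          unfolding ptf_def by (simp only: if_False ltr_slid)
        then show ?thesis using d by simp
      qed (simp add: ptf_def)
      moreover have "ptf d S (ptf d T f) l a b = ltr d (ptf d T f l) / of_nat d * lid a b"
        using False by (simp add: ptf_def)
      moreover have "ptf d (S \<inter> T) f l a b = ltr d (f l) / of_nat d * lid a b"
        using False by (simp add: ptf_def)
      ultimately show ?thesis by simp
    qed
  qed
  also have "geq n d \<dots> (ptr_embed n d (S \<inter> T) (prodop n f))"
    by (rule geq_sym, rule ptr_prodop'[OF d]) (use S in auto)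
  finally show "geq n d (ptr_embed n d S (ptr_embed n d T (prodop n f))) (ptr_embed n d (S \<inter> T) (prodop n f))" .
qed




definition supp_op :: "nat \<Rightarrow> nat set \<Rightarrow> lop \<Rightarrow> lop \<Rightarrow> gop" where
  "supp_op n S X Y = prodop n (\<lambda>l. if l \<in> S then X else Y)"

lemma tensor_pow_prodop: "tensor_pow n \<rho> = prodop n (\<lambda>_. \<rho>)"
  by (simp add: tensor_pow_def prodop_def)

lemma gcomm_prodop:
  "gcomm n d (prodop n f) (prodop n g) =
   (\<lambda>x y. prodop n (\<lambda>l. lmult d (f l) (g l)) x y - prodop n (\<lambda>l. lmult d (g l) (f l)) x y)"
  by (simp add: gcomm_eq prodop_mult)

lemma ptf_in: "l \<in> S \<Longrightarrow> ptf d S f l = f l" by (simp add: ptf_def)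
lemma ptf_out: "l \<notin> S \<Longrightarrow> ptf d S f l = (\<lambda>a b. ltr d (f l) / of_nat d * lid a b)" by (simp add: ptf_def)

lemma linmap_K2L: "linmap n d (\<lambda>A. ptr_embed n d S (gmult n d (gcomm n d A B) R))"
  by (intro linmap_comp[OF linmap_ptr] linmap_comp[OF linmap_gmult_left] linmap_gcomm_left)
lemma linmap_K2R: "linmap n d (\<lambda>A. gcomm n d (ptr_embed n d S A) B)"
  by (intro linmap_comp[OF linmap_gcomm_left] linmap_ptr)
lemma linmap_K3R: "linmap n d (\<lambda>A. gmult n d (gcomm n d (ptr_embed n d S A) B) K)"
  by (intro linmap_comp[OF linmap_gmult_left] linmap_comp[OF linmap_gcomm_left] linmap_ptr)

lemma K2:
  assumes d: "0 < d" and S: "S \<subseteq> {..<n}"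
    and inv1: "\<And>a b. a < d \<Longrightarrow> b < d \<Longrightarrow> lmult d \<rho> \<tau> a b = lid a b"
    and inv2: "\<And>a b. a < d \<Longrightarrow> b < d \<Longrightarrow> lmult d \<tau> \<rho> a b = lid a b"
  shows "geq n d (ptr_embed n d S (gmult n d (gcomm n d A (prodop n (\<lambda>_. \<rho>))) (supp_op n S lid \<tau>)))
                 (gcomm n d (ptr_embed n d S A) (supp_op n S \<rho> lid))"
proof (rule expansion_principle[OF linmap_K2L linmap_K2R])
  fix f
  let ?R = "\<lambda>l. if l \<in> S then lid else \<tau>"
  let ?Q = "\<lambda>l. if l \<in> S then \<rho> else lid"
  have "geq n d (ptr_embed n d S (gmult n d (gcomm n d (prodop n f) (prodop n (\<lambda>_. \<rho>))) (supp_op n S lid \<tau>)))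
     (\<lambda>x y. ptr_embed n d S (prodop n (\<lambda>l. lmult d (lmult d (f l) \<rho>) (?R l))) x y
            - ptr_embed n d S (prodop n (\<lambda>l. lmult d (lmult d \<rho> (f l)) (?R l))) x y)"
    by (simp add: gcomm_prodop supp_op_def gmult_sub_left prodop_mult ptr_sub)
  also have "geq n d \<dots> (\<lambda>x y. prodop n (ptf d S (\<lambda>l. lmult d (lmult d (f l) \<rho>) (?R l))) x y
            - prodop n (ptf d S (\<lambda>l. lmult d (lmult d \<rho> (f l)) (?R l))) x y)"
    by (intro geq_sub ptr_prodop'[OF d S])
  also have "geq n d \<dots> (\<lambda>x y. prodop n (\<lambda>l. lmult d (ptf d S f l) (?Q l)) x y
            - prodop n (\<lambda>l. lmult d (?Q l) (ptf d S f l)) x y)"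
  proof (intro geq_sub prodop_cong)
    fix l a b assume a: "a < d" and b: "b < d"
    show "ptf d S (\<lambda>l. lmult d (lmult d (f l) \<rho>) (?R l)) l a b = lmult d (ptf d S f l) (?Q l) a b"
    proof (cases "l \<in> S")
      case True then show ?thesis using b by (simp add: ptf_in lmult_lid_right)
    next
      case False
      have "ltr d (lmult d (lmult d (f l) \<rho>) \<tau>) = ltr d (f l)"
        by (rule ltr_cong, rule lmult_inv_right[OF inv1]) auto
      then show ?thesis using False a b by (simp add: ptf_out lmult_lid_right lmult_slidd_left)
    qed
  next
    fix l a b assume a: "a < d" and b: "b < d"
    show "ptf d S (\<lambda>l. lmult d (lmult d \<rho> (f l)) (?R l)) l a b = lmult d (?Q l) (ptf d S f l) a b"
    proof (cases "l \<in> S")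
      case True then show ?thesis using b by (simp add: ptf_in lmult_lid_right)
    next
      case False
      have "ltr d (lmult d (lmult d \<rho> (f l)) \<tau>) = ltr d (lmult d \<tau> (lmult d \<rho> (f l)))"
        by (rule ltr_comm)
      also have "\<dots> = ltr d (lmult d (lmult d \<tau> \<rho>) (f l))" by (simp add: lmult_assoc)
      also have "\<dots> = ltr d (lmult d lid (f l))"
        by (rule ltr_cong, rule lmult_cong) (auto simp: inv2)
      also have "\<dots> = ltr d (f l)" by (rule ltr_cong) (simp add: lmult_lid_left)
      finally have "ltr d (lmult d (lmult d \<rho> (f l)) \<tau>) = ltr d (f l)" .
      then show ?thesis using False b by (simp add: ptf_out lmult_slid_right lmult_lid_left a)
    qed
  qed
  also have "geq n d \<dots> (gcomm n d (prodop n (ptf d S f)) (supp_op n S \<rho> lid))"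
    by (simp add: gcomm_prodop supp_op_def)
  also have "geq n d \<dots> (gcomm n d (ptr_embed n d S (prodop n f)) (supp_op n S \<rho> lid))"
    by (rule gcomm_resp_left, rule geq_sym, rule ptr_prodop'[OF d S])
  finally show "geq n d (ptr_embed n d S (gmult n d (gcomm n d (prodop n f) (prodop n (\<lambda>_. \<rho>))) (supp_op n S lid \<tau>)))
                 (gcomm n d (ptr_embed n d S (prodop n f)) (supp_op n S \<rho> lid))" .
qed

lemma K3:
  assumes d: "0 < d" and S: "S \<subseteq> {..<n}"
  shows "geq n d (gcomm n d (ptr_embed n d S A) (prodop n (\<lambda>_. \<rho>)))
                 (gmult n d (gcomm n d (ptr_embed n d S A) (supp_op n S \<rho> lid)) (supp_op n S lid \<rho>))"
proof (rule expansion_principle[OF linmap_K2R linmap_K3R])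
  fix f
  let ?K = "\<lambda>l. if l \<in> S then lid else \<rho>"
  let ?Q = "\<lambda>l. if l \<in> S then \<rho> else lid"
  have "geq n d (gcomm n d (ptr_embed n d S (prodop n f)) (prodop n (\<lambda>_. \<rho>)))
               (gcomm n d (prodop n (ptf d S f)) (prodop n (\<lambda>_. \<rho>)))"
    by (rule gcomm_resp_left, rule ptr_prodop'[OF d S])
  also have "geq n d \<dots> (\<lambda>x y. prodop n (\<lambda>l. lmult d (lmult d (ptf d S f l) (?Q l)) (?K l)) x y
            - prodop n (\<lambda>l. lmult d (lmult d (?Q l) (ptf d S f l)) (?K l)) x y)"
    unfolding gcomm_prodop
  proof (intro geq_sub prodop_cong)
    fix l a b assume a: "a < d" and b: "b < d"
    show "lmult d (ptf d S f l) \<rho> a b = lmult d (lmult d (ptf d S f l) (?Q l)) (?K l) a b"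
    proof (cases "l \<in> S")
      case True then show ?thesis using b by (simp add: lmult_lid_right)
    next
      case False
      have "lmult d (lmult d (ptf d S f l) lid) \<rho> a b = lmult d (ptf d S f l) \<rho> a b"
        by (rule lmult_cong) (auto simp: lmult_lid_right)
      then show ?thesis using False by simp
    qed
  next
    fix l a b assume a: "a < d" and b: "b < d"
    show "lmult d \<rho> (ptf d S f l) a b = lmult d (lmult d (?Q l) (ptf d S f l)) (?K l) a b"
    proof (cases "l \<in> S")
      case True then show ?thesis using b by (simp add: lmult_lid_right)
    next
      case False
      have "lmult d (lmult d lid (ptf d S f l)) \<rho> a b = lmult d (ptf d S f l) \<rho> a b"
        by (rule lmult_cong) (auto simp: lmult_lid_left a)
      then show ?thesis using False a b by (simp add: ptf_out lmult_slidd_left lmult_slidd_right)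
    qed
  qed
  also have "geq n d \<dots> (gmult n d (gcomm n d (prodop n (ptf d S f)) (supp_op n S \<rho> lid)) (supp_op n S lid \<rho>))"
    by (simp add: gcomm_prodop supp_op_def gmult_sub_left prodop_mult)
  also have "geq n d \<dots> (gmult n d (gcomm n d (ptr_embed n d S (prodop n f)) (supp_op n S \<rho> lid)) (supp_op n S lid \<rho>))"
    by (rule gmult_resp_left, rule gcomm_resp_left, rule geq_sym, rule ptr_prodop'[OF d S])
  finally show "geq n d (gcomm n d (ptr_embed n d S (prodop n f)) (prodop n (\<lambda>_. \<rho>)))
                 (gmult n d (gcomm n d (ptr_embed n d S (prodop n f)) (supp_op n S \<rho> lid)) (supp_op n S lid \<rho>))" .
qed




lemma sum_single:
  assumes "finite A" "x0 \<in> A" "\<And>x. x \<in> A \<Longrightarrow> x \<noteq> x0 \<Longrightarrow> g x = 0"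
  shows "sum g A = g x0"
proof -
  have "sum g A = g x0 + sum g (A - {x0})" using assms by (simp add: sum.remove)
  also have "sum g (A - {x0}) = 0" using assms by (intro sum.neutral) auto
  finally show ?thesis by simp
qed

definition Pairs :: "nat \<Rightarrow> (nat \<times> nat) set" where
  "Pairs n = {(p,q). p < q \<and> q < n}"

lemma finite_Pairs: "finite (Pairs n)"
  by (rule finite_subset[of _ "{..<n} \<times> {..<n}"]) (auto simp: Pairs_def)

definition Dsum :: "nat \<Rightarrow> (nat set \<Rightarrow> complex) \<Rightarrow> complex" where
  "Dsum n V = (\<Sum>pq\<in>Pairs n. V {fst pq, snd pq} - V {fst pq} - V {snd pq} + V {})
             + (\<Sum>p<n. V {p} - V {}) + V {}"

lemma Dsum_cong:
  assumes "\<And>S. S \<subseteq> {..<n} \<Longrightarrow> V S = V' S"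
  shows "Dsum n V = Dsum n V'"
proof -
  have a: "\<And>pq. pq \<in> Pairs n \<Longrightarrow> {fst pq, snd pq} \<subseteq> {..<n} \<and> {fst pq} \<subseteq> {..<n} \<and> {snd pq} \<subseteq> {..<n}"
    by (auto simp: Pairs_def)
  show ?thesis unfolding Dsum_def using assms a
    by (intro arg_cong2[where f="(+)"] sum.cong) auto
qed

lemma Dsum_add: "Dsum n (\<lambda>S. V S + W S) = Dsum n V + Dsum n W"
proof -
  have 1: "(\<Sum>pq\<in>Pairs n. (V {fst pq, snd pq} + W {fst pq, snd pq}) - (V {fst pq} + W {fst pq}) - (V {snd pq} + W {snd pq}) + (V {} + W {}))
    = (\<Sum>pq\<in>Pairs n. V {fst pq, snd pq} - V {fst pq} - V {snd pq} + V {}) + (\<Sum>pq\<in>Pairs n. W {fst pq, snd pq} - W {fst pq} - W {snd pq} + W {})"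
    by (subst sum.distrib[symmetric]) (rule sum.cong, auto simp: algebra_simps)
  have 2: "(\<Sum>p<n. (V {p} + W {p}) - (V {} + W {})) = (\<Sum>p<n. V {p} - V {}) + (\<Sum>p<n. W {p} - W {})"
    by (subst sum.distrib[symmetric]) (rule sum.cong, auto simp: algebra_simps)
  show ?thesis unfolding Dsum_def 1 2 by (simp add: algebra_simps)
qed

lemma Dsum_scale: "Dsum n (\<lambda>S. c * V S) = c * Dsum n V"
  by (simp add: Dsum_def sum_distrib_left algebra_simps)

lemma Dsum_sum: "finite K \<Longrightarrow> Dsum n (\<lambda>S. \<Sum>k\<in>K. V k S) = (\<Sum>k\<in>K. Dsum n (V k))"
  by (induction rule: finite_induct) (simp_all add: Dsum_add, simp add: Dsum_def)

lemma Dsum_empty: "Dsum n (\<lambda>S. W (S \<inter> {})) = W {}"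
  by (simp add: Dsum_def)

lemma Dsum_local:
  assumes i: "i < n" and j: "j < n"
  shows "Dsum n (\<lambda>S. W (S \<inter> {i, j})) = W {i, j}"
proof (cases "i = j")
  case True
  have P: "(\<Sum>pq\<in>Pairs n. W ({fst pq, snd pq} \<inter> {i,j}) - W ({fst pq} \<inter> {i,j}) - W ({snd pq} \<inter> {i,j}) + W ({} \<inter> {i,j})) = 0"
  proof (rule sum.neutral, rule ballI)
    fix pq assume "pq \<in> Pairs n"
    then obtain p q where pq: "pq = (p,q)" "p < q" by (auto simp: Pairs_def)
    show "W ({fst pq, snd pq} \<inter> {i,j}) - W ({fst pq} \<inter> {i,j}) - W ({snd pq} \<inter> {i,j}) + W ({} \<inter> {i,j}) = 0"
      using pq True by (cases "p = j"; cases "q = j") (auto simp: Int_insert_left)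
  qed
  have Q: "(\<Sum>p<n. W ({p} \<inter> {i,j}) - W ({} \<inter> {i,j})) = W {i} - W {}"
    using i True by (subst sum_single[of _ i]) auto
  show ?thesis unfolding Dsum_def P Q using True by simp
next
  case False
  define a where "a = min i j"
  define b where "b = max i j"
  have ab: "{i,j} = {a,b}" "a < b" "b < n" using False i j by (auto simp: a_def b_def)
  have P: "(\<Sum>pq\<in>Pairs n. W ({fst pq, snd pq} \<inter> {a,b}) - W ({fst pq} \<inter> {a,b}) - W ({snd pq} \<inter> {a,b}) + W ({} \<inter> {a,b}))
         = W {a,b} - W {a} - W {b} + W {}"
  proof (subst sum_single[of _ "(a,b)"])
    show "finite (Pairs n)" by (rule finite_Pairs)
    show "(a,b) \<in> Pairs n" using ab by (auto simp: Pairs_def)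
  next
    fix pq assume pq: "pq \<in> Pairs n" "pq \<noteq> (a,b)"
    then obtain p q where pq': "pq = (p,q)" "p < q" by (auto simp: Pairs_def)
    have "\<not> (p \<in> {a,b} \<and> q \<in> {a,b})" using pq pq' ab by auto
    then show "W ({fst pq, snd pq} \<inter> {a,b}) - W ({fst pq} \<inter> {a,b}) - W ({snd pq} \<inter> {a,b}) + W ({} \<inter> {a,b}) = 0"
      using pq' by (auto simp: Int_insert_left)
  qed (use ab in \<open>auto simp: Int_insert_left\<close>)
  have Q: "(\<Sum>p<n. W ({p} \<inter> {a,b}) - W ({} \<inter> {a,b})) = (W {a} - W {}) + (W {b} - W {})"
  proof -
    have "(\<Sum>p<n. W ({p} \<inter> {a,b}) - W ({} \<inter> {a,b})) = (\<Sum>p\<in>{a,b}. W ({p} \<inter> {a,b}) - W ({} \<inter> {a,b}))"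
      using ab by (intro sum.mono_neutral_right) auto
    also have "\<dots> = (W {a} - W {}) + (W {b} - W {})" using ab by auto
    finally show ?thesis .
  qed
  show ?thesis unfolding Dsum_def ab(1) P Q by simp
qed




lemma ptr_sum: "ptr_embed n d S (\<lambda>x y. \<Sum>k\<in>K. G k x y) = (\<lambda>x y. \<Sum>k\<in>K. ptr_embed n d S (G k) x y)"
  unfolding ptr_embed_def
  by (intro ext) (auto simp: sum_divide_distrib[symmetric] intro: sum.swap)

lemma ptr_scale: "ptr_embed n d S (\<lambda>x y. c * G x y) = (\<lambda>x y. c * ptr_embed n d S G x y)"
  unfolding ptr_embed_def by (intro ext) (auto simp: sum_distrib_left)

lemma prod_lid_01:
  "(\<Prod>l\<in>I. if l \<in> S then (if P l then 1 else 0) else lid (x l) (y l)) =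
   (\<Prod>l\<in>I. if (if l \<in> S then P l else x l = y l) then 1 else (0::complex))"
  by (intro prod.cong) (auto simp: lid_def)

lemma acts_on_expand:
  assumes d: "0 < d" and S: "S \<subseteq> {..<n}" and A: "acts_on n d S T"
  shows "geq n d T (\<lambda>x y. \<Sum>p\<in>{u\<in>cfgs n d. \<forall>k<n. k \<notin> S \<longrightarrow> u!k = 0} \<times> {u\<in>cfgs n d. \<forall>k<n. k \<notin> S \<longrightarrow> u!k = 0}.
        T (fst p) (snd p) * prodop n (\<lambda>l. if l \<in> S then lunit (fst p!l) (snd p!l) else lid) x y)"
proof (rule geqI)
  fix x y assume x: "x \<in> cfgs n d" and y: "y \<in> cfgs n d"
  let ?Z = "{u\<in>cfgs n d. \<forall>k<n. k \<notin> S \<longrightarrow> u!k = 0}"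
  let ?pr = "\<lambda>x. map (\<lambda>k. if k \<in> S then x ! k else 0) [0..<n]"
  obtain a where a: "\<And>x y. x \<in> cfgs n d \<Longrightarrow> y \<in> cfgs n d \<Longrightarrow> T x y = (if agree_off n S x y then a (?pr x) (?pr y) else 0)"
    using A unfolding acts_on_def by blast
  have prZ: "\<And>x. x \<in> cfgs n d \<Longrightarrow> ?pr x \<in> ?Z" using d by (auto simp: cfgs_iff)
  have key: "\<And>u. u \<in> ?Z \<Longrightarrow> (\<forall>l<n. l \<in> S \<longrightarrow> x!l = u!l) \<longleftrightarrow> u = ?pr x"
    using x by (auto simp: cfgs_iff list_eq_iff_nth_eq)
  have keyy: "\<And>u. u \<in> ?Z \<Longrightarrow> (\<forall>l<n. l \<in> S \<longrightarrow> y!l = u!l) \<longleftrightarrow> u = ?pr y"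
    using y by (auto simp: cfgs_iff list_eq_iff_nth_eq)
  have trm: "prodop n (\<lambda>l. if l \<in> S then lunit (fst p!l) (snd p!l) else lid) x y
      = (if p = (?pr x, ?pr y) \<and> agree_off n S x y then 1 else 0)" if p: "p \<in> ?Z \<times> ?Z" for p
  proof -
    have "prodop n (\<lambda>l. if l \<in> S then lunit (fst p!l) (snd p!l) else lid) x y
        = (\<Prod>l\<in>{..<n}. if (if l \<in> S then x!l = fst p!l \<and> y!l = snd p!l else x!l = y!l) then 1 else 0)"
      unfolding prodop_def lunit_def by (intro prod.cong) (auto simp: lid_def)
    also have "\<dots> = (if \<forall>l\<in>{..<n}. (if l \<in> S then x!l = fst p!l \<and> y!l = snd p!l else x!l = y!l) then 1 else 0)"
      by (rule prod_if_01) simp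
    also have "(\<forall>l\<in>{..<n}. (if l \<in> S then x!l = fst p!l \<and> y!l = snd p!l else x!l = y!l))
        \<longleftrightarrow> (\<forall>l<n. l \<in> S \<longrightarrow> x!l = fst p!l) \<and> (\<forall>l<n. l \<in> S \<longrightarrow> y!l = snd p!l) \<and> agree_off n S x y"
      by (auto simp: agree_off_def)
    also have "\<dots> \<longleftrightarrow> p = (?pr x, ?pr y) \<and> agree_off n S x y"
      using key[of "fst p"] keyy[of "snd p"] p by (cases p) auto
    finally show ?thesis .
  qed
  have "(\<Sum>p\<in>?Z \<times> ?Z. T (fst p) (snd p) * prodop n (\<lambda>l. if l \<in> S then lunit (fst p!l) (snd p!l) else lid) x y)
      = (\<Sum>p\<in>?Z \<times> ?Z. if p = (?pr x, ?pr y) then (if agree_off n S x y then T (?pr x) (?pr y) else 0) else 0)"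
    by (intro sum.cong refl) (auto simp: trm)
  also have "\<dots> = (if agree_off n S x y then T (?pr x) (?pr y) else 0)"
    using prZ[OF x] prZ[OF y] finite_cfgs by simp
  also have "\<dots> = T x y"
  proof -
    have px: "?pr x \<in> cfgs n d" "?pr y \<in> cfgs n d" using prZ x y by auto
    have ag: "agree_off n S (?pr x) (?pr y)" by (auto simp: agree_off_def)
    have pp: "\<And>z. ?pr (?pr z) = ?pr z" by (auto simp: list_eq_iff_nth_eq)
    have e1: "T (?pr x) (?pr y) = a (?pr (?pr x)) (?pr (?pr y))"
      using a[OF px] ag by (simp only: if_True)
    also have "\<dots> = a (?pr x) (?pr y)" by (simp only: pp)
    finally show ?thesis using a[OF x y] by simp
  qed
  finally show "T x y = (\<Sum>p\<in>?Z \<times> ?Z. T (fst p) (snd p) * prodop n (\<lambda>l. if l \<in> S then lunit (fst p!l) (snd p!l) else lid) x y)"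
    by simp
qed

lemma ptf_local:
  assumes "\<And>l a b. l < n \<Longrightarrow> l \<notin> U \<Longrightarrow> a < d \<Longrightarrow> b < d \<Longrightarrow> F l a b = lid a b" and d: "0 < d"
  shows "geq n d (prodop n (ptf d S F)) (prodop n (ptf d (S \<inter> U) F))"
proof (rule prodop_cong)
  fix l a b assume l: "l < n" and a: "a < d" and b: "b < d"
  show "ptf d S F l a b = ptf d (S \<inter> U) F l a b"
  proof (cases "l \<in> S \<and> l \<notin> U")
    case True
    have "ltr d (F l) = ltr d lid" using assms(1) l True by (intro ltr_cong) auto
    then show ?thesis using True assms(1) l a b d by (simp add: ptf_def ltr_def lid_def)
  qed (auto simp: ptf_def)
qed

lemma ptf_full:
  assumes "\<And>l a b. l < n \<Longrightarrow> l \<notin> U \<Longrightarrow> a < d \<Longrightarrow> b < d \<Longrightarrow> F l a b = lid a b" and d: "0 < d"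
  shows "geq n d (prodop n (ptf d U F)) (prodop n F)"
proof (rule prodop_cong)
  fix l a b assume l: "l < n" and a: "a < d" and b: "b < d"
  show "ptf d U F l a b = F l a b"
  proof (cases "l \<in> U")
    case False
    have "ltr d (F l) = ltr d lid" using assms(1) l False by (intro ltr_cong) auto
    then show ?thesis using False assms(1) l a b d by (simp add: ptf_def ltr_def lid_def)
  qed (auto simp: ptf_def)
qed




lemma prodop_lid: "x \<in> cfgs n d \<Longrightarrow> y \<in> cfgs n d \<Longrightarrow> prodop n (\<lambda>_. lid) x y = (if x = y then 1 else 0)"
proof -
  assume x: "x \<in> cfgs n d" and y: "y \<in> cfgs n d"
  have "prodop n (\<lambda>_. lid) x y = (if \<forall>l\<in>{..<n}. x!l = y!l then 1 else 0)"
    unfolding prodop_def lid_def by (rule prod_if_01) simp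
  also have "(\<forall>l\<in>{..<n}. x!l = y!l) \<longleftrightarrow> x = y"
    using x y by (auto simp: cfgs_iff list_eq_iff_nth_eq)
  finally show ?thesis .
qed

lemma Dsum_const: "Dsum n (\<lambda>S. k) = k"
  by (simp add: Dsum_def)

lemma H_decomp:
  assumes d: "0 < d" and L: "two_local n d H" and x: "x \<in> cfgs n d" and y: "y \<in> cfgs n d"
  shows "H x y = Dsum n (\<lambda>S. ptr_embed n d S H x y)"
proof -
  obtain c T where Tact: "\<forall>i<n. \<forall>j<n. acts_on n d {i, j} (T i j)"
    and Hf: "\<forall>x\<in>cfgs n d. \<forall>y\<in>cfgs n d. H x y = (if x = y then c else 0) + (\<Sum>i<n. \<Sum>j<n. T i j x y)"
    using L unfolding two_local_def by blast
  define Z where "Z i j = {u\<in>cfgs n d. \<forall>k<n. k \<notin> {i,j} \<longrightarrow> u!k = 0}" for i j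
  define F where "F i j p = (\<lambda>l. if l \<in> {i,j} then lunit (fst p!l) (snd p!l) else lid)" for i j :: nat and p :: "nat list \<times> nat list"
  define E where "E = (\<lambda>x y. c * prodop n (\<lambda>_. lid) x y +
      (\<Sum>i<n. \<Sum>j<n. \<Sum>p\<in>Z i j \<times> Z i j. T i j (fst p) (snd p) * prodop n (F i j p) x y))"
  have HE: "geq n d H E"
  proof (rule geqI)
    fix x y assume x: "x \<in> cfgs n d" and y: "y \<in> cfgs n d"
    have "\<And>i j. i < n \<Longrightarrow> j < n \<Longrightarrow> T i j x y = (\<Sum>p\<in>Z i j \<times> Z i j. T i j (fst p) (snd p) * prodop n (F i j p) x y)"
      unfolding Z_def F_def
      by (rule geqD[OF acts_on_expand[OF d _ ] x y]) (use Tact in auto)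
    then show "H x y = E x y" using Hf x y by (simp add: E_def prodop_lid)
  qed
  define W0 where "W0 U = prodop n (ptf d U (\<lambda>_. lid)) x y" for U
  define W where "W i j p U = prodop n (ptf d U (F i j p)) x y" for i j p U
  have Floc: "\<And>i j p l a b. l < n \<Longrightarrow> l \<notin> {i,j} \<Longrightarrow> a < d \<Longrightarrow> b < d \<Longrightarrow> F i j p l a b = lid a b"
    by (simp add: F_def)
  have PS: "ptr_embed n d S H x y = c * W0 (S \<inter> {}) + (\<Sum>i<n. \<Sum>j<n. \<Sum>p\<in>Z i j \<times> Z i j. T i j (fst p) (snd p) * W i j p (S \<inter> {i,j}))"
    if S: "S \<subseteq> {..<n}" for S
  proof -
    have "ptr_embed n d S H x y = ptr_embed n d S E x y"
      by (rule geqD[OF ptr_resp[OF HE] x y])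
    also have "\<dots> = c * ptr_embed n d S (prodop n (\<lambda>_. lid)) x y +
       (\<Sum>i<n. \<Sum>j<n. \<Sum>p\<in>Z i j \<times> Z i j. T i j (fst p) (snd p) * ptr_embed n d S (prodop n (F i j p)) x y)"
      unfolding E_def by (simp add: ptr_add ptr_scale ptr_sum)
    also have "\<dots> = c * W0 S + (\<Sum>i<n. \<Sum>j<n. \<Sum>p\<in>Z i j \<times> Z i j. T i j (fst p) (snd p) * W i j p S)"
      unfolding W0_def W_def using geqD[OF ptr_prodop'[OF d S] x y] by simp
    also have "\<dots> = c * W0 (S \<inter> {}) + (\<Sum>i<n. \<Sum>j<n. \<Sum>p\<in>Z i j \<times> Z i j. T i j (fst p) (snd p) * W i j p (S \<inter> {i,j}))"
    proof -
      have "W0 S = W0 (S \<inter> {})" unfolding W0_def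
        by (rule geqD[OF ptf_local[OF _ d] x y]) (simp add: lid_def)
      moreover have "\<And>i j p. W i j p S = W i j p (S \<inter> {i,j})" unfolding W_def
        by (rule geqD[OF ptf_local[OF Floc d] x y]) auto
      ultimately show ?thesis by simp
    qed
    finally show ?thesis .
  qed
  have "Dsum n (\<lambda>S. ptr_embed n d S H x y) = Dsum n (\<lambda>S. c * W0 (S \<inter> {}) + (\<Sum>i<n. \<Sum>j<n. \<Sum>p\<in>Z i j \<times> Z i j. T i j (fst p) (snd p) * W i j p (S \<inter> {i,j})))"
    by (rule Dsum_cong) (rule PS)
  also have "\<dots> = c * W0 {} + (\<Sum>i<n. \<Sum>j<n. \<Sum>p\<in>Z i j \<times> Z i j. T i j (fst p) (snd p) * Dsum n (\<lambda>S. W i j p (S \<inter> {i,j})))"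
    by (simp add: Dsum_add Dsum_scale Dsum_sum finite_cfgs Z_def Dsum_const)
  also have "\<dots> = c * W0 {} + (\<Sum>i<n. \<Sum>j<n. \<Sum>p\<in>Z i j \<times> Z i j. T i j (fst p) (snd p) * W i j p {i,j})"
    by (simp add: Dsum_local)
  also have "\<dots> = E x y"
  proof -
    have "W0 {} = prodop n (\<lambda>_. lid) x y" unfolding W0_def
      by (rule geqD[OF ptf_full[OF _ d] x y]) (simp add: lid_def)
    moreover have "\<And>i j p. W i j p {i,j} = prodop n (F i j p) x y" unfolding W_def
      by (rule geqD[OF ptf_full[OF Floc d] x y]) auto
    ultimately show ?thesis by (simp add: E_def)
  qed
  also have "\<dots> = H x y" using geqD[OF HE x y] by simp
  finally show ?thesis by simp
qed




definition rest :: "nat \<Rightarrow> lop \<Rightarrow> nat \<Rightarrow> nat list \<Rightarrow> nat list \<Rightarrow> complex" where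
  "rest n \<rho> p x y = (\<Prod>l\<in>{..<n}-{p}. \<rho> (x!l) (y!l))"

lemma prodop_site_val:
  assumes "p < n"
  shows "prodop n (\<lambda>l. if l = p then X else \<rho>) x y = X (x!p) (y!p) * rest n \<rho> p x y"
proof -
  have "(\<Prod>l\<in>{..<n}-{p}. (if l = p then X else \<rho>) (x!l) (y!l)) = (\<Prod>l\<in>{..<n}-{p}. \<rho> (x!l) (y!l))"
    by (rule prod.cong) auto
  then show ?thesis using prodop_site[OF assms, of "\<lambda>l. if l = p then X else \<rho>" x y] unfolding rest_def
    by simp
qed

lemma merge_single: "length c = n \<Longrightarrow> i < n \<Longrightarrow> merge n {i} x c = c[i := x ! i]"
  by (auto simp: merge_def list_eq_iff_nth_eq nth_list_update)

lemma merge_empty: "length c = n \<Longrightarrow> merge n {} x c = c"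
  by (auto simp: merge_def list_eq_iff_nth_eq)

lemma agree_off_empty: "x \<in> cfgs n d \<Longrightarrow> y \<in> cfgs n d \<Longrightarrow> agree_off n {} x y \<longleftrightarrow> x = y"
  by (auto simp: agree_off_def cfgs_iff list_eq_iff_nth_eq)

lemma compl_cfgs_empty: "compl_cfgs n d {} = cfgs n d"
  by (simp add: compl_cfgs_def)

lemma ptr_empty:
  assumes x: "x \<in> cfgs n d" and y: "y \<in> cfgs n d"
  shows "ptr_embed n d {} H x y = (if x = y then gtrace n d H / of_nat d ^ n else 0)"
proof -
  have "\<And>x y. (\<Sum>c\<in>compl_cfgs n d {}. H (merge n {} x c) (merge n {} y c)) = gtrace n d H"
    unfolding compl_cfgs_empty gtrace_def
    by (intro sum.cong refl) (simp add: merge_empty cfgs_length)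
  then show ?thesis using x y by (simp add: ptr_embed_def agree_off_empty)
qed

lemma embed1_Hsite:
  assumes i: "i < n" and x: "x \<in> cfgs n d" and y: "y \<in> cfgs n d"
  shows "embed1 n i (Hsite n d H i) x y = ptr_embed n d {i} H x y - ptr_embed n d {} H x y"
proof -
  have cs: "(\<Sum>c\<in>compl_cfgs n d {i}. H (merge n {i} x c) (merge n {i} y c))
      = (\<Sum>c\<in>compl_cfgs n d {i}. H (c[i := x!i]) (c[i := y!i]))"
  proof (intro sum.cong refl)
    fix c assume "c \<in> compl_cfgs n d {i}"
    then have "length c = n" by (auto simp: compl_cfgs_def cfgs_length)
    then show "H (merge n {i} x c) (merge n {i} y c) = H (c[i := x!i]) (c[i := y!i])"
      using i by (simp add: merge_single)
  qed
  have ag: "agree_off n {i} x y \<and> x!i = y!i \<longleftrightarrow> x = y"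
    using x y i by (auto simp: agree_off_def cfgs_iff list_eq_iff_nth_eq)
  show ?thesis
    unfolding embed1_def Hsite_def ptr_empty[OF x y] using cs ag
    by (auto simp: ptr_embed_def)
qed

lemma H_split:
  assumes d: "0 < d" and L: "two_local n d H" and x: "x \<in> cfgs n d" and y: "y \<in> cfgs n d"
  shows "H x y = (\<Sum>pq\<in>Pairs n. Hpair n d H (fst pq) (snd pq) x y) + (\<Sum>p<n. embed1 n p (Hsite n d H p) x y)
                 + ptr_embed n d {} H x y"
  unfolding H_decomp[OF d L x y] Dsum_def Hpair_def
  using embed1_Hsite[OF _ x y] by simp

lemma embed1_prodop:
  assumes i: "i < n"
  shows "geq n d (embed1 n i X) (prodop n (\<lambda>l. if l = i then X else lid))"
proof (rule geqI)
  fix x y assume x: "x \<in> cfgs n d" and y: "y \<in> cfgs n d"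
  have "rest n lid i x y = (if \<forall>l\<in>{..<n}-{i}. x!l = y!l then 1 else 0)"
    unfolding rest_def lid_def by (rule prod_if_01) simp
  then show "embed1 n i X x y = prodop n (\<lambda>l. if l = i then X else lid) x y"
    unfolding prodop_site_val[OF i] by (auto simp: embed1_def agree_off_def)
qed

lemma gmult_sum_left: "gmult n d (\<lambda>x y. \<Sum>k\<in>K. G k x y) B = (\<lambda>x y. \<Sum>k\<in>K. gmult n d (G k) B x y)"
  unfolding gmult_def by (intro ext) (simp add: sum_distrib_right, rule sum.swap)
lemma gmult_sum_right: "gmult n d B (\<lambda>x y. \<Sum>k\<in>K. G k x y) = (\<lambda>x y. \<Sum>k\<in>K. gmult n d B (G k) x y)"
  unfolding gmult_def by (intro ext) (simp add: sum_distrib_left, rule sum.swap)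
lemma gcomm_sum_left: "gcomm n d (\<lambda>x y. \<Sum>k\<in>K. G k x y) B = (\<lambda>x y. \<Sum>k\<in>K. gcomm n d (G k) B x y)"
  unfolding gcomm_eq gmult_sum_left gmult_sum_right by (simp add: sum_subtractf)
lemma gcomm_add_left: "gcomm n d (\<lambda>x y. A x y + C x y) B = (\<lambda>x y. gcomm n d A B x y + gcomm n d C B x y)"
  unfolding gcomm_eq gmult_add_left gmult_add_right by (intro ext) simp

lemma gadj_resp: "geq n d A B \<Longrightarrow> geq n d (gadj A) (gadj B)"
  by (simp add: geq_def gadj_def)

lemma gadj_prodop: "gadj (prodop n f) = prodop n (\<lambda>l. ladj (f l))"
  by (simp add: gadj_def prodop_def ladj_def)

lemma ladj_lid: "ladj lid = lid" by (intro ext) (auto simp: ladj_def lid_def)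

definition site_op :: "nat \<Rightarrow> nat \<Rightarrow> lop \<Rightarrow> lop \<Rightarrow> gop" where
  "site_op n p \<rho> X = prodop n (\<lambda>l. if l = p then X else \<rho>)"

lemma gcomm_embed1:
  assumes p: "p < n"
  shows "geq n d (gcomm n d (embed1 n p X) (prodop n (\<lambda>_. \<rho>))) (site_op n p \<rho> (lcomm d X \<rho>))"
proof -
  have "geq n d (gcomm n d (embed1 n p X) (prodop n (\<lambda>_. \<rho>))) (gcomm n d (prodop n (\<lambda>l. if l = p then X else lid)) (prodop n (\<lambda>_. \<rho>)))"
    by (rule gcomm_resp_left, rule embed1_prodop[OF p])
  also have "geq n d \<dots> (\<lambda>x y. site_op n p \<rho> (lmult d X \<rho>) x y - site_op n p \<rho> (lmult d \<rho> X) x y)"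
    unfolding gcomm_prodop site_op_def
    by (intro geq_sub prodop_cong) (auto simp: lmult_lid_left lmult_lid_right)
  also have "geq n d \<dots> (site_op n p \<rho> (lcomm d X \<rho>))"
    by (rule geqI) (simp add: site_op_def prodop_site_val[OF p] lcomm_def algebra_simps)
  finally show ?thesis .
qed

lemma gdiss_embed1:
  assumes p: "p < n"
  shows "geq n d (gdiss n d (embed1 n p L) (prodop n (\<lambda>_. \<rho>))) (site_op n p \<rho> (ldiss d L \<rho>))"
proof -
  let ?e = "prodop n (\<lambda>l. if l = p then L else lid)"
  let ?ea = "prodop n (\<lambda>l. if l = p then ladj L else lid)"
  have e: "geq n d (embed1 n p L) ?e" by (rule embed1_prodop[OF p])
  have ea: "geq n d (gadj (embed1 n p L)) ?ea"
  proof -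
    have "geq n d (gadj (embed1 n p L)) (gadj ?e)" by (rule gadj_resp[OF e])
    also have "gadj ?e = ?ea" unfolding gadj_prodop
      by (rule arg_cong[where f="prodop n"]) (auto simp: ladj_lid)
    finally show ?thesis .
  qed
  let ?s = "prodop n (\<lambda>_. \<rho>)"
  have t1: "geq n d (gmult n d (gmult n d (embed1 n p L) ?s) (gadj (embed1 n p L)))
                    (site_op n p \<rho> (lmult d (lmult d L \<rho>) (ladj L)))"
  proof -
    have "geq n d (gmult n d (gmult n d (embed1 n p L) ?s) (gadj (embed1 n p L))) (gmult n d (gmult n d ?e ?s) ?ea)"
      by (intro geq_trans[OF gmult_resp_left[OF gmult_resp_left[OF e]] gmult_resp_right[OF ea]])
    also have "geq n d \<dots> (site_op n p \<rho> (lmult d (lmult d L \<rho>) (ladj L)))"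
      unfolding prodop_mult site_op_def
      by (rule prodop_cong) (auto simp: lmult_lid_left lmult_lid_right)
    finally show ?thesis .
  qed
  have t2: "geq n d (gmult n d (gmult n d (gadj (embed1 n p L)) (embed1 n p L)) ?s)
                    (site_op n p \<rho> (lmult d (lmult d (ladj L) L) \<rho>))"
  proof -
    have "geq n d (gmult n d (gmult n d (gadj (embed1 n p L)) (embed1 n p L)) ?s) (gmult n d (gmult n d ?ea ?e) ?s)"
      by (intro gmult_resp_left geq_trans[OF gmult_resp_left[OF ea] gmult_resp_right[OF e]])
    also have "geq n d \<dots> (site_op n p \<rho> (lmult d (lmult d (ladj L) L) \<rho>))"
      unfolding prodop_mult site_op_def
    proof (rule prodop_cong)
      fix l a b assume "l < n" "a < d" "b < d"
      show "lmult d (lmult d (if l = p then ladj L else lid) (if l = p then L else lid)) \<rho> a b =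
            (if l = p then lmult d (lmult d (ladj L) L) \<rho> else \<rho>) a b"
      proof (cases "l = p")
        case False
        have "lmult d (lmult d lid lid) \<rho> a b = lmult d lid \<rho> a b"
          by (rule lmult_cong) (auto simp: lmult_lid_left \<open>a < d\<close>)
        then show ?thesis using False \<open>a < d\<close> by (simp add: lmult_lid_left)
      qed simp
    qed
    finally show ?thesis .
  qed
  have t3: "geq n d (gmult n d ?s (gmult n d (gadj (embed1 n p L)) (embed1 n p L)))
                    (site_op n p \<rho> (lmult d \<rho> (lmult d (ladj L) L)))"
  proof -
    have "geq n d (gmult n d ?s (gmult n d (gadj (embed1 n p L)) (embed1 n p L))) (gmult n d ?s (gmult n d ?ea ?e))"
      by (intro gmult_resp_right geq_trans[OF gmult_resp_left[OF ea] gmult_resp_right[OF e]])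
    also have "geq n d \<dots> (site_op n p \<rho> (lmult d \<rho> (lmult d (ladj L) L)))"
      unfolding prodop_mult site_op_def
    proof (rule prodop_cong)
      fix l a b assume "l < n" "a < d" "b < d"
      show "lmult d \<rho> (lmult d (if l = p then ladj L else lid) (if l = p then L else lid)) a b =
            (if l = p then lmult d \<rho> (lmult d (ladj L) L) else \<rho>) a b"
      proof (cases "l = p")
        case False
        have "lmult d \<rho> (lmult d lid lid) a b = lmult d \<rho> lid a b"
          by (rule lmult_cong) (auto simp: lmult_lid_left)
        then show ?thesis using False \<open>b < d\<close> by (simp add: lmult_lid_right)
      qed simp
    qed
    finally show ?thesis .
  qed
  show ?thesis
  proof (rule geqI)
    fix x y assume x: "x \<in> cfgs n d" and y: "y \<in> cfgs n d"
    show "gdiss n d (embed1 n p L) ?s x y = site_op n p \<rho> (ldiss d L \<rho>) x y"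
      unfolding gdiss_def geqD[OF t1 x y] geqD[OF t2 x y] geqD[OF t3 x y]
      by (simp add: site_op_def prodop_site_val[OF p] ldiss_def algebra_simps)
  qed
qed




lemma gcomm_scalar_id:
  assumes P: "\<And>x y. x \<in> cfgs n d \<Longrightarrow> y \<in> cfgs n d \<Longrightarrow> P x y = (if x = y then t else 0)"
    and x: "x \<in> cfgs n d" and y: "y \<in> cfgs n d"
  shows "gcomm n d P B x y = 0"
proof -
  have 1: "gmult n d P B x y = t * B x y"
  proof -
    have "gmult n d P B x y = (\<Sum>z\<in>cfgs n d. if z = x then t * B z y else 0)"
      unfolding gmult_def using P x by (intro sum.cong refl) auto
    then show ?thesis using x finite_cfgs by simp
  qed
  have 2: "gmult n d B P x y = t * B x y"
  proof -
    have "gmult n d B P x y = (\<Sum>z\<in>cfgs n d. if z = y then t * B x z else 0)"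
      unfolding gmult_def using P y by (intro sum.cong refl) (auto simp: mult.commute)
    then show ?thesis using y finite_cfgs by simp
  qed
  show ?thesis using 1 2 by (simp add: gcomm_def)
qed

lemma GKSL_expand:
  assumes d: "0 < d" and L: "two_local n d H" and x: "x \<in> cfgs n d" and y: "y \<in> cfgs n d"
  shows "GKSL n d H Gam Lop (tensor_pow n \<rho>) x y =
     - \<i> * (\<Sum>pq\<in>Pairs n. gcomm n d (Hpair n d H (fst pq) (snd pq)) (prodop n (\<lambda>_. \<rho>)) x y)
     + (\<Sum>p<n. Lsite n d H Gam Lop p \<rho> (x!p) (y!p) * rest n \<rho> p x y)"
proof -
  let ?s = "prodop n (\<lambda>_. \<rho>)"
  let ?D = "\<lambda>x y. (\<Sum>pq\<in>Pairs n. Hpair n d H (fst pq) (snd pq) x y) + (\<Sum>p<n. embed1 n p (Hsite n d H p) x y)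
                 + ptr_embed n d {} H x y"
  have HS: "geq n d H ?D" by (rule geqI) (rule H_split[OF d L])
  have "gcomm n d H ?s x y = gcomm n d ?D ?s x y"
    by (rule geqD[OF gcomm_resp_left[OF HS] x y])
  also have "\<dots> = (\<Sum>pq\<in>Pairs n. gcomm n d (Hpair n d H (fst pq) (snd pq)) ?s x y)
                + (\<Sum>p<n. gcomm n d (embed1 n p (Hsite n d H p)) ?s x y) + gcomm n d (ptr_embed n d {} H) ?s x y"
    by (simp add: gcomm_add_left gcomm_sum_left)
  also have "gcomm n d (ptr_embed n d {} H) ?s x y = 0"
    by (rule gcomm_scalar_id[OF _ x y]) (simp add: ptr_empty)
  also have "(\<Sum>p<n. gcomm n d (embed1 n p (Hsite n d H p)) ?s x y)
           = (\<Sum>p<n. lcomm d (Hsite n d H p) \<rho> (x!p) (y!p) * rest n \<rho> p x y)"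
    by (intro sum.cong refl) (simp add: geqD[OF gcomm_embed1 x y] site_op_def prodop_site_val)
  finally have C: "gcomm n d H ?s x y = (\<Sum>pq\<in>Pairs n. gcomm n d (Hpair n d H (fst pq) (snd pq)) ?s x y)
      + (\<Sum>p<n. lcomm d (Hsite n d H p) \<rho> (x!p) (y!p) * rest n \<rho> p x y)" by simp
  have D: "(\<Sum>i<n. \<Sum>\<alpha>\<in>Gam i. gdiss n d (embed1 n i (Lop i \<alpha>)) ?s x y)
         = (\<Sum>i<n. (\<Sum>\<alpha>\<in>Gam i. ldiss d (Lop i \<alpha>) \<rho> (x!i) (y!i)) * rest n \<rho> i x y)"
    by (intro sum.cong refl) (simp add: geqD[OF gdiss_embed1 x y] site_op_def prodop_site_val sum_distrib_right)
  show ?thesis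
    unfolding GKSL_def tensor_pow_prodop C D Lsite_def
    by (simp add: algebra_simps sum.distrib sum_distrib_left sum_distrib_right sum_subtractf sum_negf)
qed




lemma ptr_Hpair_gen:
  assumes d: "0 < d" and S: "S \<subseteq> {..<n}" and i: "i < n" and j: "j < n"
  shows "geq n d (ptr_embed n d S (Hpair n d H i j))
     (\<lambda>x y. ptr_embed n d (S \<inter> {i,j}) H x y - ptr_embed n d (S \<inter> {i}) H x y
            - ptr_embed n d (S \<inter> {j}) H x y + ptr_embed n d {} H x y)"
  unfolding Hpair_def ptr_add ptr_sub
  using i j by (intro geq_add geq_sub ptr_ptr[OF d S, of "{}", simplified] ptr_ptr[OF d S]) auto

lemma Hpair_local:
  assumes d: "0 < d" and pq: "p < n" "q < n"
  shows "geq n d (ptr_embed n d {p,q} (Hpair n d H p q)) (Hpair n d H p q)"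
proof -
  have "geq n d (ptr_embed n d {p,q} (Hpair n d H p q))
     (\<lambda>x y. ptr_embed n d ({p,q} \<inter> {p,q}) H x y - ptr_embed n d ({p,q} \<inter> {p}) H x y
            - ptr_embed n d ({p,q} \<inter> {q}) H x y + ptr_embed n d {} H x y)"
    using pq by (intro ptr_Hpair_gen[OF d]) auto
  moreover have "{p,q} \<inter> {p,q} = {p,q}" "{p,q} \<inter> {p} = {p}" "{p,q} \<inter> {q} = {q}" by auto
  ultimately show ?thesis by (simp add: Hpair_def)
qed

lemma ptr_k_Hpair:
  assumes d: "0 < d" and k: "k < n" and ij: "i < j" "j < n"
  shows "geq n d (ptr_embed n d {k} (Hpair n d H i j)) (\<lambda>x y. 0)"
proof -
  have g: "geq n d (ptr_embed n d {k} (Hpair n d H i j))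
     (\<lambda>x y. ptr_embed n d ({k} \<inter> {i,j}) H x y - ptr_embed n d ({k} \<inter> {i}) H x y
            - ptr_embed n d ({k} \<inter> {j}) H x y + ptr_embed n d {} H x y)"
    using k ij by (intro ptr_Hpair_gen[OF d]) auto
  show ?thesis
  proof (cases "k = i")
    case True
    then have "{k} \<inter> {i,j} = {k}" "{k} \<inter> {i} = {k}" "{k} \<inter> {j} = {}" using ij by auto
    then show ?thesis using g by simp
  next
    case False
    show ?thesis
    proof (cases "k = j")
      case True
      then have "{k} \<inter> {i,j} = {k}" "{k} \<inter> {i} = {}" "{k} \<inter> {j} = {k}" using ij by auto
      then show ?thesis using g by simp
    next
      case False
      then have "{k} \<inter> {i,j} = {}" "{k} \<inter> {i} = {}" "{k} \<inter> {j} = {}" using \<open>k \<noteq> i\<close> by auto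
      then show ?thesis using g by simp
    qed
  qed
qed

lemma ptr_pair_Hpair:
  assumes d: "0 < d" and pq: "p < q" "q < n" and ij: "i < j" "j < n" and ne: "(i,j) \<noteq> (p,q)"
  shows "geq n d (ptr_embed n d {p,q} (Hpair n d H i j)) (\<lambda>x y. 0)"
proof -
  have g: "geq n d (ptr_embed n d {p,q} (Hpair n d H i j))
     (\<lambda>x y. ptr_embed n d ({p,q} \<inter> {i,j}) H x y - ptr_embed n d ({p,q} \<inter> {i}) H x y
            - ptr_embed n d ({p,q} \<inter> {j}) H x y + ptr_embed n d {} H x y)"
    using pq ij by (intro ptr_Hpair_gen[OF d]) auto
  show ?thesis
  proof (cases "i \<in> {p,q}")
    case False
    then have "{p,q} \<inter> {i,j} = {p,q} \<inter> {j}" "{p,q} \<inter> {i} = {}" by auto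
    then show ?thesis using g by simp
  next
    case True
    then have "j \<notin> {p,q}" using pq ij ne by auto
    then have "{p,q} \<inter> {i,j} = {p,q} \<inter> {i}" "{p,q} \<inter> {j} = {}" by auto
    then show ?thesis using g by simp
  qed
qed

lemma prod_split_set: "finite A \<Longrightarrow> (\<Prod>l\<in>A. if l \<in> B then f l else g l) = (\<Prod>l\<in>A \<inter> B. f l) * (\<Prod>l\<in>A \<inter> - B. (g l :: complex))"
  by (simp add: prod.If_cases)

lemma embed2_supp:
  assumes pq: "p \<noteq> q" "p < n" "q < n"
  shows "geq n d (embed2 n p q X X) (supp_op n {p,q} X lid)"
proof (rule geqI)
  fix x y assume x: "x \<in> cfgs n d" and y: "y \<in> cfgs n d"
  have "supp_op n {p,q} X lid x y = (\<Prod>l\<in>{..<n} \<inter> {p,q}. X (x!l) (y!l)) * (\<Prod>l\<in>{..<n} \<inter> - {p,q}. lid (x!l) (y!l))"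
  proof -
    have "supp_op n {p,q} X lid x y = (\<Prod>l\<in>{..<n}. if l \<in> {p,q} then X (x!l) (y!l) else lid (x!l) (y!l))"
      unfolding supp_op_def prodop_def by (rule prod.cong) auto
    also have "\<dots> = (\<Prod>l\<in>{..<n} \<inter> {p,q}. X (x!l) (y!l)) * (\<Prod>l\<in>{..<n} \<inter> - {p,q}. lid (x!l) (y!l))"
      by (rule prod_split_set) simp
    finally show ?thesis .
  qed
  also have "(\<Prod>l\<in>{..<n} \<inter> {p,q}. X (x!l) (y!l)) = X (x!p) (y!p) * X (x!q) (y!q)"
  proof -
    have "{..<n} \<inter> {p,q} = {p,q}" using pq by auto
    then show ?thesis using pq by simp
  qed
  also have "(\<Prod>l\<in>{..<n} \<inter> - {p,q}. lid (x!l) (y!l)) = (if agree_off n {p,q} x y then 1 else 0)"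
  proof -
    have "(\<Prod>l\<in>{..<n} \<inter> - {p,q}. lid (x!l) (y!l)) = (if \<forall>l\<in>{..<n} \<inter> - {p,q}. x!l = y!l then 1 else 0)"
      unfolding lid_def by (rule prod_if_01) simp
    then show ?thesis by (auto simp: agree_off_def)
  qed
  finally show "embed2 n p q X X x y = supp_op n {p,q} X lid x y"
    by (simp add: embed2_def)
qed

lemma gmult_zero_left: "geq n d A (\<lambda>x y. 0) \<Longrightarrow> geq n d (gmult n d A B) (\<lambda>x y. 0)"
  using gmult_resp_left[of n d A "\<lambda>x y. 0" B] by (simp add: gmult_def)

lemma gcomm_zero_left: "geq n d A (\<lambda>x y. 0) \<Longrightarrow> geq n d (gcomm n d A B) (\<lambda>x y. 0)"
  using gcomm_resp_left[of n d A "\<lambda>x y. 0" B] by (simp add: gcomm_def gmult_def)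

lemma commute_sigma:
  assumes d: "0 < d" and pq: "p < q" "q < n"
    and iv: "gzero n d (gcomm n d (Hpair n d H p q) (embed2 n p q \<rho> \<rho>))"
  shows "geq n d (gcomm n d (Hpair n d H p q) (prodop n (\<lambda>_. \<rho>))) (\<lambda>x y. 0)"
proof -
  let ?S = "{p,q}"
  let ?Hp = "Hpair n d H p q"
  have S: "?S \<subseteq> {..<n}" using pq by auto
  have HP: "geq n d (ptr_embed n d ?S ?Hp) ?Hp" using pq by (intro Hpair_local[OF d]) auto
  have "geq n d (gcomm n d ?Hp (prodop n (\<lambda>_. \<rho>))) (gcomm n d (ptr_embed n d ?S ?Hp) (prodop n (\<lambda>_. \<rho>)))"
    by (rule gcomm_resp_left, rule geq_sym, rule HP)
  also have "geq n d \<dots> (gmult n d (gcomm n d (ptr_embed n d ?S ?Hp) (supp_op n ?S \<rho> lid)) (supp_op n ?S lid \<rho>))"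
    by (rule K3[OF d S])
  also have "geq n d \<dots> (gmult n d (gcomm n d ?Hp (embed2 n p q \<rho> \<rho>)) (supp_op n ?S lid \<rho>))"
  proof (rule gmult_resp_left)
    have "geq n d (gcomm n d (ptr_embed n d ?S ?Hp) (supp_op n ?S \<rho> lid)) (gcomm n d ?Hp (supp_op n ?S \<rho> lid))"
      by (rule gcomm_resp_left[OF HP])
    also have "geq n d \<dots> (gcomm n d ?Hp (embed2 n p q \<rho> \<rho>))"
      using pq by (intro gcomm_resp_right geq_sym[OF embed2_supp]) auto
    finally show "geq n d (gcomm n d (ptr_embed n d ?S ?Hp) (supp_op n ?S \<rho> lid)) (gcomm n d ?Hp (embed2 n p q \<rho> \<rho>))" .
  qed
  also have "geq n d \<dots> (\<lambda>x y. 0)"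
    using iv by (intro gmult_zero_left) (simp add: gzero_def geq_def)
  finally show ?thesis .
qed

lemma part_B:
  assumes d: "0 < d" and L: "two_local n d H"
    and iii: "cond_iii n d H Gam Lop \<rho>" and iv: "cond_iv n d H \<rho>"
  shows "gzero n d (GKSL n d H Gam Lop (tensor_pow n \<rho>))"
  unfolding gzero_def
proof (intro ballI)
  fix x y assume x: "x \<in> cfgs n d" and y: "y \<in> cfgs n d"
  have 1: "gcomm n d (Hpair n d H (fst pq) (snd pq)) (prodop n (\<lambda>_. \<rho>)) x y = 0" if "pq \<in> Pairs n" for pq
  proof -
    obtain p q where pq0: "pq = (p,q)" by (cases pq)
    then have pq: "pq = (p,q)" "p < q" "q < n" using that by (auto simp: Pairs_def)
    have "gzero n d (gcomm n d (Hpair n d H p q) (embed2 n p q \<rho> \<rho>))"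
      using iv pq by (simp add: cond_iv_def)
    from geqD[OF commute_sigma[OF d pq(2,3) this] x y] show ?thesis using pq by simp
  qed
  have 2: "Lsite n d H Gam Lop p \<rho> (x!p) (y!p) = 0" if "p < n" for p
    using iii that x y cfgs_nth by (auto simp: cond_iii_def lzero_def)
  show "GKSL n d H Gam Lop (tensor_pow n \<rho>) x y = 0"
    unfolding GKSL_expand[OF d L x y] using 1 2 by simp
qed




lemma ltr_lcomm: "ltr d (lcomm d A B) = 0"
  using ltr_comm[of d A B] by (simp add: ltr_def lcomm_def sum_subtractf)

lemma ltr_ldiss: "ltr d (ldiss d L \<rho>) = 0"
proof -
  have "ltr d (lmult d (lmult d L \<rho>) (ladj L)) = ltr d (lmult d (ladj L) (lmult d L \<rho>))"
    by (rule ltr_comm)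
  also have "\<dots> = ltr d (lmult d (lmult d (ladj L) L) \<rho>)" by (simp only: lmult_assoc)
  finally have 1: "ltr d (lmult d (lmult d L \<rho>) (ladj L)) = ltr d (lmult d (lmult d (ladj L) L) \<rho>)" .
  have 2: "ltr d (lmult d \<rho> (lmult d (ladj L) L)) = ltr d (lmult d (lmult d (ladj L) L) \<rho>)"
    by (rule ltr_comm)
  have "ltr d (ldiss d L \<rho>) = ltr d (lmult d (lmult d L \<rho>) (ladj L))
       - (1/2) * (ltr d (lmult d (lmult d (ladj L) L) \<rho>) + ltr d (lmult d \<rho> (lmult d (ladj L) L)))"
    by (simp only: ltr_def ldiss_def sum_subtractf sum_distrib_left[symmetric] sum.distrib)
  then show ?thesis using 1 2 by simp
qed

lemma ltr_Lsite: "ltr d (Lsite n d H Gam Lop p \<rho>) = 0"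
proof -
  have "ltr d (Lsite n d H Gam Lop p \<rho>) = - \<i> * ltr d (lcomm d (Hsite n d H p) \<rho>) + (\<Sum>\<alpha>\<in>Gam p. ltr d (ldiss d (Lop p \<alpha>) \<rho>))"
  proof -
    have "ltr d (Lsite n d H Gam Lop p \<rho>) = (\<Sum>a<d. - \<i> * lcomm d (Hsite n d H p) \<rho> a a) + (\<Sum>a<d. \<Sum>\<alpha>\<in>Gam p. ldiss d (Lop p \<alpha>) \<rho> a a)"
      unfolding Lsite_def ltr_def by (rule sum.distrib)
    also have "(\<Sum>a<d. \<Sum>\<alpha>\<in>Gam p. ldiss d (Lop p \<alpha>) \<rho> a a) = (\<Sum>\<alpha>\<in>Gam p. \<Sum>a<d. ldiss d (Lop p \<alpha>) \<rho> a a)"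
      by (rule sum.swap)
    finally show ?thesis by (simp add: ltr_def sum_distrib_left)
  qed
  then show ?thesis by (simp add: ltr_lcomm ltr_ldiss)
qed

lemma gmult_scale_left: "gmult n d (\<lambda>x y. c * A x y) B = (\<lambda>x y. c * gmult n d A B x y)"
  unfolding gmult_def by (intro ext) (simp add: sum_distrib_left mult.assoc)

lemma Phi_zero: "ptr_embed n d S (gmult n d (\<lambda>x y. 0) R) = (\<lambda>x y. 0)"
  by (intro ext) (simp add: ptr_embed_def gmult_def)

lemma linmap_Phi: "linmap n d (\<lambda>G. ptr_embed n d S (gmult n d G R))"
  by (intro linmap_comp[OF linmap_ptr] linmap_gmult_left)

lemma Phi_site:
  assumes d: "0 < d" and k: "k < n" and m: "m < n" and a: "a < d" and b: "b < d"
    and inv1: "\<And>a b. a < d \<Longrightarrow> b < d \<Longrightarrow> lmult d \<rho> \<tau> a b = lid a b"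
  shows "ptr_embed n d {k} (gmult n d (site_op n m \<rho> X) (supp_op n {k} lid \<tau>))
           ((replicate n 0)[k := a]) ((replicate n 0)[k := b])
       = (if m = k then X a b else \<rho> a b * (ltr d (lmult d X \<tau>) / of_nat d))"
proof -
  let ?x = "(replicate n 0)[k := a]" and ?y = "(replicate n 0)[k := b]"
  have x: "?x \<in> cfgs n d" and y: "?y \<in> cfgs n d"
    using a b d k by (auto simp: cfgs_iff nth_list_update)
  let ?g = "\<lambda>l. lmult d (if l = m then X else \<rho>) (if l \<in> {k} then lid else \<tau>)"
  have "ptr_embed n d {k} (gmult n d (site_op n m \<rho> X) (supp_op n {k} lid \<tau>)) ?x ?y
      = prodop n (ptf d {k} ?g) ?x ?y"
    unfolding site_op_def supp_op_def prodop_mult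
    by (rule geqD[OF ptr_prodop'[OF d] x y]) (use k in auto)
  also have "\<dots> = ptf d {k} ?g k a b * (\<Prod>l\<in>{..<n}-{k}. ptf d {k} ?g l 0 0)"
  proof -
    have "(\<Prod>l\<in>{..<n}-{k}. ptf d {k} ?g l (?x!l) (?y!l)) = (\<Prod>l\<in>{..<n}-{k}. ptf d {k} ?g l 0 0)"
      by (rule prod.cong) (auto simp: nth_list_update)
    then show ?thesis using k by (simp add: prodop_site[OF k] nth_list_update)
  qed
  also have "ptf d {k} ?g k a b = (if m = k then X a b else \<rho> a b)"
    using b by (simp add: ptf_def lmult_lid_right)
  also have "(\<Prod>l\<in>{..<n}-{k}. ptf d {k} ?g l 0 0) = (if m = k then 1 else ltr d (lmult d X \<tau>) / of_nat d)"
  proof -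
    have ltr_rt: "ltr d (lmult d \<rho> \<tau>) = of_nat d"
      using inv1 by (simp add: ltr_def lid_def)
    have v: "\<And>l. l \<noteq> k \<Longrightarrow> ptf d {k} ?g l 0 0 = (if l = m then ltr d (lmult d X \<tau>) / of_nat d else 1)"
      using d ltr_rt by (simp add: ptf_def lid_def)
    show ?thesis
    proof (cases "m = k")
      case True
      have "(\<Prod>l\<in>{..<n}-{k}. ptf d {k} ?g l 0 0) = (\<Prod>l\<in>{..<n}-{k}. 1)"
        using v True by (intro prod.cong) auto
      then show ?thesis using True by simp
    next
      case False
      have "(\<Prod>l\<in>{..<n}-{k}. ptf d {k} ?g l 0 0) = (\<Prod>l\<in>{..<n}-{k}. if l = m then ltr d (lmult d X \<tau>) / of_nat d else 1)"
        using v by (intro prod.cong) auto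
      also have "\<dots> = ltr d (lmult d X \<tau>) / of_nat d"
        using False m by (simp add: prod.delta)
      finally show ?thesis using False by simp
    qed
  qed
  finally show ?thesis by simp
qed




lemma Phi_expand:
  "ptr_embed n d S (gmult n d (\<lambda>x y. - \<i> * (\<Sum>pq\<in>P. C pq x y) + (\<Sum>m<n. G m x y)) R)
   = (\<lambda>x y. - \<i> * (\<Sum>pq\<in>P. ptr_embed n d S (gmult n d (C pq) R) x y) + (\<Sum>m<n. ptr_embed n d S (gmult n d (G m) R) x y))"
  by (simp only: gmult_add_left gmult_scale_left gmult_sum_left ptr_add ptr_scale ptr_sum)

lemma Phi_expand2:
  "ptr_embed n d S (gmult n d (\<lambda>x y. - \<i> * (\<Sum>pq\<in>P. C pq x y)) R)
   = (\<lambda>x y. - \<i> * (\<Sum>pq\<in>P. ptr_embed n d S (gmult n d (C pq) R) x y))"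
  by (simp only: gmult_scale_left gmult_sum_left ptr_scale ptr_sum)

lemma step1:
  assumes d: "0 < d" and L: "two_local n d H"
    and inv1: "\<And>a b. a < d \<Longrightarrow> b < d \<Longrightarrow> lmult d \<rho> \<tau> a b = lid a b"
    and inv2: "\<And>a b. a < d \<Longrightarrow> b < d \<Longrightarrow> lmult d \<tau> \<rho> a b = lid a b"
    and tr1: "ltr d \<rho> = 1"
    and Z: "gzero n d (GKSL n d H Gam Lop (tensor_pow n \<rho>))"
    and k: "k < n" and a: "a < d" and b: "b < d"
  shows "Lsite n d H Gam Lop k \<rho> a b = 0"
proof -
  let ?Ls = "\<lambda>m. Lsite n d H Gam Lop m \<rho>"
  let ?s = "prodop n (\<lambda>_. \<rho>)"
  let ?R = "supp_op n {k} lid \<tau>"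
  let ?C = "\<lambda>pq. gcomm n d (Hpair n d H (fst pq) (snd pq)) ?s"
  let ?E = "\<lambda>x y. - \<i> * (\<Sum>pq\<in>Pairs n. ?C pq x y) + (\<Sum>m<n. site_op n m \<rho> (?Ls m) x y)"
  have GE: "geq n d (GKSL n d H Gam Lop (tensor_pow n \<rho>)) ?E"
    by (rule geqI) (simp add: GKSL_expand[OF d L] site_op_def prodop_site_val)
  have G0: "geq n d (GKSL n d H Gam Lop (tensor_pow n \<rho>)) (\<lambda>x y. 0)"
    using Z by (simp add: gzero_def geq_def)
  have E0: "geq n d (ptr_embed n d {k} (gmult n d ?E ?R)) (\<lambda>x y. 0)"
  proof -
    have "geq n d (ptr_embed n d {k} (gmult n d ?E ?R)) (ptr_embed n d {k} (gmult n d (\<lambda>x y. 0) ?R))"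
      by (rule linmap_resp[OF linmap_Phi], rule geq_trans[OF geq_sym[OF GE] G0])
    then show ?thesis by (simp add: Phi_zero)
  qed
  let ?x = "(replicate n 0)[k := a]" and ?y = "(replicate n 0)[k := b]"
  have x: "?x \<in> cfgs n d" and y: "?y \<in> cfgs n d"
    using a b d k by (auto simp: cfgs_iff nth_list_update)
  have Cz: "ptr_embed n d {k} (gmult n d (?C pq) ?R) ?x ?y = 0" if pq: "pq \<in> Pairs n" for pq
  proof -
    obtain i j where ij0: "pq = (i,j)" by (cases pq)
    then have ij: "pq = (i,j)" "i < j" "j < n" using pq by (auto simp: Pairs_def)
    have "geq n d (ptr_embed n d {k} (gmult n d (?C pq) ?R)) (gcomm n d (ptr_embed n d {k} (Hpair n d H i j)) (supp_op n {k} \<rho> lid))"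
      unfolding ij(1) fst_conv snd_conv using k by (intro K2[OF d _ inv1 inv2]) auto
    also have "geq n d \<dots> (\<lambda>x y. 0)"
      by (rule gcomm_zero_left, rule ptr_k_Hpair[OF d k ij(2,3)])
    finally show ?thesis using x y by (simp add: geq_def)
  qed
  define c where "c = (\<Sum>m\<in>{..<n}-{k}. ltr d (lmult d (?Ls m) \<tau>) / of_nat d)"
  have main: "?Ls k a' b' + \<rho> a' b' * c = 0" if a': "a' < d" and b': "b' < d" for a' b'
  proof -
    let ?x = "(replicate n 0)[k := a']" and ?y = "(replicate n 0)[k := b']"
    have x: "?x \<in> cfgs n d" and y: "?y \<in> cfgs n d"
      using a' b' d k by (auto simp: cfgs_iff nth_list_update)
    have Cz: "ptr_embed n d {k} (gmult n d (?C pq) ?R) ?x ?y = 0" if pq: "pq \<in> Pairs n" for pq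
    proof -
      obtain i j where ij0: "pq = (i,j)" by (cases pq)
      then have ij: "pq = (i,j)" "i < j" "j < n" using pq by (auto simp: Pairs_def)
      have "geq n d (ptr_embed n d {k} (gmult n d (?C pq) ?R)) (gcomm n d (ptr_embed n d {k} (Hpair n d H i j)) (supp_op n {k} \<rho> lid))"
        unfolding ij(1) fst_conv snd_conv using k by (intro K2[OF d _ inv1 inv2]) auto
      also have "geq n d \<dots> (\<lambda>x y. 0)"
        by (rule gcomm_zero_left, rule ptr_k_Hpair[OF d k ij(2,3)])
      finally show ?thesis using x y by (simp add: geq_def)
    qed
    have "0 = ptr_embed n d {k} (gmult n d ?E ?R) ?x ?y" using geqD[OF E0 x y] by simp
    also have "\<dots> = (\<Sum>m<n. ptr_embed n d {k} (gmult n d (site_op n m \<rho> (?Ls m)) ?R) ?x ?y)"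
      unfolding Phi_expand using Cz by simp
    also have "\<dots> = (\<Sum>m<n. if m = k then ?Ls k a' b' else \<rho> a' b' * (ltr d (lmult d (?Ls m) \<tau>) / of_nat d))"
      by (intro sum.cong refl) (simp add: Phi_site[OF d k _ a' b' inv1])
    also have "\<dots> = ?Ls k a' b' + (\<Sum>m\<in>{..<n}-{k}. \<rho> a' b' * (ltr d (lmult d (?Ls m) \<tau>) / of_nat d))"
    proof -
      have "(\<Sum>m<n. if m = k then ?Ls k a' b' else \<rho> a' b' * (ltr d (lmult d (?Ls m) \<tau>) / of_nat d))
        = ?Ls k a' b' + (\<Sum>m\<in>{..<n}-{k}. if m = k then ?Ls k a' b' else \<rho> a' b' * (ltr d (lmult d (?Ls m) \<tau>) / of_nat d))"
        using k by (subst sum.remove[of _ k]) auto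
      also have "(\<Sum>m\<in>{..<n}-{k}. if m = k then ?Ls k a' b' else \<rho> a' b' * (ltr d (lmult d (?Ls m) \<tau>) / of_nat d))
        = (\<Sum>m\<in>{..<n}-{k}. \<rho> a' b' * (ltr d (lmult d (?Ls m) \<tau>) / of_nat d))"
        by (intro sum.cong) auto
      finally show ?thesis .
    qed
    also have "\<dots> = ?Ls k a' b' + \<rho> a' b' * c" by (simp add: c_def sum_distrib_left)
    finally show ?thesis by simp
  qed
  have "(\<Sum>a<d. ?Ls k a a + \<rho> a a * c) = 0" using main by simp
  then have "ltr d (?Ls k) + ltr d \<rho> * c = 0"
    by (simp add: ltr_def sum.distrib sum_distrib_right)
  then have "c = 0" using tr1 ltr_Lsite[of d n H Gam Lop k \<rho>] by simp
  then show ?thesis using main[OF a b] by simp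
qed




lemma step2:
  assumes d: "0 < d" and L: "two_local n d H"
    and inv1: "\<And>a b. a < d \<Longrightarrow> b < d \<Longrightarrow> lmult d \<rho> \<tau> a b = lid a b"
    and inv2: "\<And>a b. a < d \<Longrightarrow> b < d \<Longrightarrow> lmult d \<tau> \<rho> a b = lid a b"
    and Z: "gzero n d (GKSL n d H Gam Lop (tensor_pow n \<rho>))"
    and Lz: "\<And>m a b. m < n \<Longrightarrow> a < d \<Longrightarrow> b < d \<Longrightarrow> Lsite n d H Gam Lop m \<rho> a b = 0"
    and pq: "p < q" "q < n"
  shows "gzero n d (gcomm n d (Hpair n d H p q) (embed2 n p q \<rho> \<rho>))"
proof -
  let ?S = "{p,q}"
  have S: "?S \<subseteq> {..<n}" using pq by auto
  let ?s = "prodop n (\<lambda>_. \<rho>)"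
  let ?R = "supp_op n ?S lid \<tau>"
  let ?C = "\<lambda>pq. gcomm n d (Hpair n d H (fst pq) (snd pq)) ?s"
  let ?E = "\<lambda>x y. - \<i> * (\<Sum>pq\<in>Pairs n. ?C pq x y)"
  let ?Hp = "Hpair n d H p q"
  have GE: "geq n d (GKSL n d H Gam Lop (tensor_pow n \<rho>)) ?E"
  proof (rule geqI)
    fix x y assume x: "x \<in> cfgs n d" and y: "y \<in> cfgs n d"
    have "\<And>m. m < n \<Longrightarrow> Lsite n d H Gam Lop m \<rho> (x!m) (y!m) = 0"
      using Lz x y cfgs_nth by blast
    then show "GKSL n d H Gam Lop (tensor_pow n \<rho>) x y = ?E x y"
      by (simp add: GKSL_expand[OF d L x y])
  qed
  have G0: "geq n d (GKSL n d H Gam Lop (tensor_pow n \<rho>)) (\<lambda>x y. 0)"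
    using Z by (simp add: gzero_def geq_def)
  have E0: "geq n d (ptr_embed n d ?S (gmult n d ?E ?R)) (\<lambda>x y. 0)"
  proof -
    have "geq n d (ptr_embed n d ?S (gmult n d ?E ?R)) (ptr_embed n d ?S (gmult n d (\<lambda>x y. 0) ?R))"
      by (rule linmap_resp[OF linmap_Phi], rule geq_trans[OF geq_sym[OF GE] G0])
    then show ?thesis by (simp add: Phi_zero)
  qed
  show ?thesis
    unfolding gzero_def
  proof (intro ballI)
    fix x y assume x: "x \<in> cfgs n d" and y: "y \<in> cfgs n d"
    have Cv: "ptr_embed n d ?S (gmult n d (?C pq) ?R) x y = (if pq = (p,q) then gcomm n d ?Hp (supp_op n ?S \<rho> lid) x y else 0)"
      if pqP: "pq \<in> Pairs n" for pq
    proof -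
      obtain i j where ij0: "pq = (i,j)" by (cases pq)
      then have ij: "pq = (i,j)" "i < j" "j < n" using pqP by (auto simp: Pairs_def)
      have g1: "geq n d (ptr_embed n d ?S (gmult n d (?C pq) ?R)) (gcomm n d (ptr_embed n d ?S (Hpair n d H i j)) (supp_op n ?S \<rho> lid))"
        unfolding ij(1) fst_conv snd_conv by (rule K2[OF d S inv1 inv2])
      show ?thesis
      proof (cases "(i,j) = (p,q)")
        case True
        have g2: "geq n d (gcomm n d (ptr_embed n d ?S (Hpair n d H i j)) (supp_op n ?S \<rho> lid)) (gcomm n d ?Hp (supp_op n ?S \<rho> lid))"
          using True pq by (intro gcomm_resp_left) (auto intro: Hpair_local[OF d])
        show ?thesis using geq_trans[OF g1 g2] x y True ij by (simp add: geq_def)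
      next
        case False
        have g2: "geq n d (gcomm n d (ptr_embed n d ?S (Hpair n d H i j)) (supp_op n ?S \<rho> lid)) (\<lambda>x y. 0)"
          by (rule gcomm_zero_left, rule ptr_pair_Hpair[OF d pq ij(2,3) False])
        show ?thesis using geq_trans[OF g1 g2] x y False ij by (auto simp: geq_def)
      qed
    qed
    have "0 = ptr_embed n d ?S (gmult n d ?E ?R) x y" using geqD[OF E0 x y] by simp
    also have "\<dots> = - \<i> * (\<Sum>pq\<in>Pairs n. if pq = (p,q) then gcomm n d ?Hp (supp_op n ?S \<rho> lid) x y else 0)"
      unfolding Phi_expand2 using Cv by simp
    also have "\<dots> = - \<i> * gcomm n d ?Hp (supp_op n ?S \<rho> lid) x y"
      using pq by (subst sum.delta[OF finite_Pairs]) (simp add: Pairs_def)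
    finally have "gcomm n d ?Hp (supp_op n ?S \<rho> lid) x y = 0" by simp
    moreover have "gcomm n d ?Hp (embed2 n p q \<rho> \<rho>) x y = gcomm n d ?Hp (supp_op n ?S \<rho> lid) x y"
      using pq by (intro geqD[OF gcomm_resp_right[OF embed2_supp] x y]) auto
    ultimately show "gcomm n d ?Hp (embed2 n p q \<rho> \<rho>) x y = 0" by simp
  qed
qed

lemma part_A:
  assumes d: "0 < d" and L: "two_local n d H"
    and inv1: "\<And>a b. a < d \<Longrightarrow> b < d \<Longrightarrow> lmult d \<rho> \<tau> a b = lid a b"
    and inv2: "\<And>a b. a < d \<Longrightarrow> b < d \<Longrightarrow> lmult d \<tau> \<rho> a b = lid a b"
    and tr1: "ltr d \<rho> = 1"
    and Z: "gzero n d (GKSL n d H Gam Lop (tensor_pow n \<rho>))"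
  shows "cond_iii n d H Gam Lop \<rho> \<and> cond_iv n d H \<rho>"
proof
  have Lz: "\<And>m a b. m < n \<Longrightarrow> a < d \<Longrightarrow> b < d \<Longrightarrow> Lsite n d H Gam Lop m \<rho> a b = 0"
    by (rule step1[OF d L inv1 inv2 tr1 Z])
  then show "cond_iii n d H Gam Lop \<rho>" by (simp add: cond_iii_def lzero_def)
  show "cond_iv n d H \<rho>"
    unfolding cond_iv_def using step2[OF d L inv1 inv2 Z Lz] by blast
qed




lemma lop_inverse:
  fixes \<rho> :: lop
  assumes inj: "\<And>v. (\<forall>a<d. (\<Sum>b<d. \<rho> a b * v b) = 0) \<Longrightarrow> (\<forall>b<d. v b = 0)"
  shows "\<exists>\<tau>. (\<forall>a<d. \<forall>b<d. lmult d \<rho> \<tau> a b = (if a = b then 1 else 0)) \<and>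
             (\<forall>a<d. \<forall>b<d. lmult d \<tau> \<rho> a b = (if a = b then 1 else 0))"
proof -
  define A where "A = mat d d (\<lambda>(a,b). \<rho> a b)"
  have A: "A \<in> carrier_mat d d" by (simp add: A_def)
  have "det A \<noteq> 0"
  proof
    assume "det A = 0"
    then obtain v where v: "v \<in> carrier_vec d" "v \<noteq> 0\<^sub>v d" "A *\<^sub>v v = 0\<^sub>v d"
      using det_0_iff_vec_prod_zero_field[OF A] by blast
    have "\<forall>a<d. (\<Sum>b<d. \<rho> a b * v $ b) = 0"
    proof (intro allI impI)
      fix a assume a: "a < d"
      have "(A *\<^sub>v v) $ a = 0" using v a by simp
      then show "(\<Sum>b<d. \<rho> a b * v $ b) = 0"
        using a v by (simp add: A_def mult_mat_vec_def scalar_prod_def atLeast0LessThan)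
    qed
    then have "\<forall>b<d. v $ b = 0" using inj[of "\<lambda>b. v $ b"] by blast
    then have "v = 0\<^sub>v d" using v by (intro eq_vecI) auto
    then show False using v by simp
  qed
  from det_non_zero_imp_unit[OF A this, of "()"]
  obtain B where B: "B \<in> carrier_mat d d" "B * A = 1\<^sub>m d" "A * B = 1\<^sub>m d"
    unfolding Units_def ring_mat_def by auto
  define \<tau> where "\<tau> = (\<lambda>a b. if a < d \<and> b < d then B $$ (a,b) else 0)"
  have 1: "lmult d \<rho> \<tau> a b = (A * B) $$ (a,b)" if "a < d" "b < d" for a b
    using that B(1) by (simp add: lmult_def \<tau>_def A_def scalar_prod_def atLeast0LessThan)
  have 2: "lmult d \<tau> \<rho> a b = (B * A) $$ (a,b)" if "a < d" "b < d" for a b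
    using that B(1) by (simp add: lmult_def \<tau>_def A_def scalar_prod_def atLeast0LessThan)
  show ?thesis using 1 2 B by (intro exI[of _ \<tau>]) auto
qed



theorem lemma2:
  fixes n d :: nat and H :: gop and Gam :: "nat \<Rightarrow> 'g set" and Lop :: "nat \<Rightarrow> 'g \<Rightarrow> lop"
    and \<rho> :: lop
  assumes herm: "ghermitian n d H"
    and local2: "two_local n d H"
    and finGam: "\<forall>i<n. finite (Gam i)"
    and dens: "is_density d \<rho>"
  shows "((\<forall>\<mu>. leigenvalue d \<rho> \<mu> \<longrightarrow> \<mu> \<noteq> 0) \<longrightarrow>
            (gzero n d (GKSL n d H Gam Lop (tensor_pow n \<rho>)) \<longleftrightarrow>
               cond_iii n d H Gam Lop \<rho> \<and> cond_iv n d H \<rho>))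
       \<and> (cond_iii n d H Gam Lop \<rho> \<and> cond_iv n d H \<rho> \<longrightarrow>
            gzero n d (GKSL n d H Gam Lop (tensor_pow n \<rho>)))"
proof -
  have trs: "(\<Sum>a<d. \<rho> a a) = 1" using dens unfolding is_density_def by (elim conjE)
  have d: "0 < d"
  proof (rule ccontr)
    assume "\<not> 0 < d"
    then have "d = 0" by simp
    then show False using trs by simp
  qed
  have tr1: "ltr d \<rho> = 1" using trs by (simp add: ltr_def)
  have B: "cond_iii n d H Gam Lop \<rho> \<and> cond_iv n d H \<rho> \<longrightarrow>
            gzero n d (GKSL n d H Gam Lop (tensor_pow n \<rho>))"
    using part_B[OF d local2] by blast
  have A: "(\<forall>\<mu>. leigenvalue d \<rho> \<mu> \<longrightarrow> \<mu> \<noteq> 0) \<longrightarrow>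
            (gzero n d (GKSL n d H Gam Lop (tensor_pow n \<rho>)) \<longleftrightarrow>
               cond_iii n d H Gam Lop \<rho> \<and> cond_iv n d H \<rho>)"
  proof
    assume fr: "\<forall>\<mu>. leigenvalue d \<rho> \<mu> \<longrightarrow> \<mu> \<noteq> 0"
    have inj: "\<forall>b<d. v b = 0" if hv: "\<forall>a<d. (\<Sum>b<d. \<rho> a b * v b) = 0" for v
    proof (rule ccontr)
      assume "\<not> (\<forall>b<d. v b = 0)"
      then have nz: "\<exists>b<d. v b \<noteq> 0" by simp
      have "\<forall>a<d. (\<Sum>b<d. \<rho> a b * v b) = 0 * v a" using hv by simp
      then have "leigenvalue d \<rho> 0" unfolding leigenvalue_def using nz by blast
      then show False using fr by blast
    qed
    obtain \<tau> where t1: "\<forall>a<d. \<forall>b<d. lmult d \<rho> \<tau> a b = (if a = b then 1 else 0)"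
      and t2: "\<forall>a<d. \<forall>b<d. lmult d \<tau> \<rho> a b = (if a = b then 1 else 0)"
    proof -
      have "\<exists>\<tau>. (\<forall>a<d. \<forall>b<d. lmult d \<rho> \<tau> a b = (if a = b then 1 else 0)) \<and>
             (\<forall>a<d. \<forall>b<d. lmult d \<tau> \<rho> a b = (if a = b then 1 else 0))"
        by (rule lop_inverse, rule inj)
      then show ?thesis using that by blast
    qed
    have inv1: "\<And>a b. a < d \<Longrightarrow> b < d \<Longrightarrow> lmult d \<rho> \<tau> a b = lid a b" using t1 by (simp add: lid_def)
    have inv2: "\<And>a b. a < d \<Longrightarrow> b < d \<Longrightarrow> lmult d \<tau> \<rho> a b = lid a b" using t2 by (simp add: lid_def)
    show "gzero n d (GKSL n d H Gam Lop (tensor_pow n \<rho>)) \<longleftrightarrow>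
               cond_iii n d H Gam Lop \<rho> \<and> cond_iv n d H \<rho>"
      using part_A[OF d local2 inv1 inv2 tr1] B by blast
  qed
  show ?thesis using A B by blast
qed

end
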